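(* Let $\mathcal{R}$ be a left-linear TRS and $\mathcal{C}\subseteq\mathcal{R}$ such that $t\leftrightarrow^*_\mathcal{C}u$ for every parallel critical pair $(t,u)$ between $\mathcal{R}$ and $\mathcal{R}$, and $\ell\to_\mathcal{C}^*r$ for every rule $\ell\to r\in\mathcal{R}{\restriction}_\mathcal{C}$. Then $\mathcal{R}$ is confluent if and only if $\mathcal{C}$ is confluent.
   Context: A TRS is a set of rules $\ell\to r$ ($\ell\notin\mathcal{V}$, $\mathcal{V}ar(r)\subseteq\mathcal{V}ar(\ell)$); left-linear: no variable repeated in a left-hand side; confluent: ${}\leftarrow^*\cdot\to^*\subseteq\to^*\cdot\leftarrow^*$; $\leftrightarrow^*_\mathcal{C}$ the conversion relation of $\mathcal{C}$. $\mathcal{F}un(\mathcal{C})$ is the set of function symbols occurring in rules of $\mathcal{C}$, and $\mathcal{R}{\restriction}_\mathcal{C}=\{\ell\to r\in\mathcal{R}\mid\mathcal{F}un(\ell)\subseteq\mathcal{F}un(\mathcal{C})\}$. Parallel critical pair between $\mathcal{R}$ and $\mathcal{R}$: for variants (renamings) $\ell\to r$ and $\ell_p\to r_p$ ($p\in P$) of $\mathcal{R}$-rules, pairwise variable-disjoint, where $P$ is a non-empty set of pairwise parallel (no one a prefix of another) function-symbol positions of $\ell$, $\sigma$ a most general unifier of $\{\ell_p\approx\ell|_p\}_{p\in P}$, and $\ell_\epsilon\to r_\epsilon$ not a variant of $\ell\to r$ if $P=\{\epsilon\}$ (root): the pair $((\ell\sigma)[r_p\sigma]_{p\in P}, r\sigma)$.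 *)

theory Defs
  imports Main
begin

datatype ('f, 'v) "term" = Var 'v | Fun 'f "('f, 'v) term list"

type_synonym ('f, 'v) rule = "('f, 'v) term \<times> ('f, 'v) term"
type_synonym ('f, 'v) trs = "('f, 'v) rule set"
type_synonym pos = "nat list"

fun vars_term :: "('f, 'v) term \<Rightarrow> 'v set" where
  "vars_term (Var x) = {x}"
| "vars_term (Fun f ts) = \<Union> (set (map vars_term ts))"

fun funs_term :: "('f, 'v) term \<Rightarrow> 'f set" where
  "funs_term (Var x) = {}"
| "funs_term (Fun f ts) = insert f (\<Union> (set (map funs_term ts)))"

fun subst :: "('f, 'v) term \<Rightarrow> ('v \<Rightarrow> ('f, 'v) term) \<Rightarrow> ('f, 'v) term" where
  "subst (Var x) \<sigma> = \<sigma> x"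
| "subst (Fun f ts) \<sigma> = Fun f (map (\<lambda>t. subst t \<sigma>) ts)"

fun valid_pos :: "('f, 'v) term \<Rightarrow> pos \<Rightarrow> bool" where
  "valid_pos t [] = True"
| "valid_pos (Var x) (i # p) = False"
| "valid_pos (Fun f ts) (i # p) = (i < length ts \<and> valid_pos (ts ! i) p)"

definition poss :: "('f, 'v) term \<Rightarrow> pos set" where
  "poss t = {p. valid_pos t p}"

fun subt_at :: "('f, 'v) term \<Rightarrow> pos \<Rightarrow> ('f, 'v) term" where
  "subt_at t [] = t"
| "subt_at (Var x) (i # p) = Var x"
| "subt_at (Fun f ts) (i # p) = subt_at (ts ! i) p"

definition fun_poss :: "('f, 'v) term \<Rightarrow> pos set" where
  "fun_poss t = {p \<in> poss t. \<not> (\<exists>x. subt_at t p = Var x)}"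

fun replace_at :: "('f, 'v) term \<Rightarrow> pos \<Rightarrow> ('f, 'v) term \<Rightarrow> ('f, 'v) term" where
  "replace_at t [] s = s"
| "replace_at (Var x) (i # p) s = Var x"
| "replace_at (Fun f ts) (i # p) s = Fun f (ts[i := replace_at (ts ! i) p s])"

fun replace_par :: "('f, 'v) term \<Rightarrow> pos set \<Rightarrow> (pos \<Rightarrow> ('f, 'v) term) \<Rightarrow> ('f, 'v) term"
and replace_par_list :: "nat \<Rightarrow> ('f, 'v) term list \<Rightarrow> pos set \<Rightarrow> (pos \<Rightarrow> ('f, 'v) term)
    \<Rightarrow> ('f, 'v) term list" where
  "replace_par (Var x) P g = (if [] \<in> P then g [] else Var x)"
| "replace_par (Fun f ts) P g = (if [] \<in> P then g [] else Fun f (replace_par_list 0 ts P g))"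
| "replace_par_list i [] P g = []"
| "replace_par_list i (t # ts) P g =
     replace_par t {q. i # q \<in> P} (\<lambda>q. g (i # q)) # replace_par_list (Suc i) ts P g"

definition pos_prefix :: "pos \<Rightarrow> pos \<Rightarrow> bool" where
  "pos_prefix p q \<longleftrightarrow> (\<exists>r. q = p @ r)"

definition parallel_pos :: "pos \<Rightarrow> pos \<Rightarrow> bool" where
  "parallel_pos p q \<longleftrightarrow> \<not> pos_prefix p q \<and> \<not> pos_prefix q p"

definition rule_vars :: "('f, 'v) rule \<Rightarrow> 'v set" where
  "rule_vars lr = vars_term (fst lr) \<union> vars_term (snd lr)"

definition is_trs :: "('f, 'v) trs \<Rightarrow> bool" where
  "is_trs R \<longleftrightarrow> (\<forall>(l, r) \<in> R. (\<nexists>x. l = Var x) \<and> vars_term r \<subseteq> vars_term l)"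

definition left_linear :: "('f, 'v) trs \<Rightarrow> bool" where
  "left_linear R \<longleftrightarrow> (\<forall>(l, r) \<in> R. \<forall>p \<in> poss l. \<forall>q \<in> poss l. \<forall>x.
      subt_at l p = Var x \<and> subt_at l q = Var x \<longrightarrow> p = q)"

definition rstep :: "('f, 'v) trs \<Rightarrow> ('f, 'v) term rel" where
  "rstep R = {(s, t). \<exists>l r p \<sigma>. (l, r) \<in> R \<and> p \<in> poss s \<and>
      subt_at s p = subst l \<sigma> \<and> t = replace_at s p (subst r \<sigma>)}"

definition conv :: "('f, 'v) trs \<Rightarrow> ('f, 'v) term rel" where
  "conv R = (rstep R \<union> (rstep R)\<inverse>)\<^sup>*"

definition confluent :: "('f, 'v) trs \<Rightarrow> bool" where
  "confluent R \<longleftrightarrow> ((rstep R)\<^sup>*)\<inverse> O (rstep R)\<^sup>* \<subseteq> (rstep R)\<^sup>* O ((rstep R)\<^sup>*)\<inverse>"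

definition funs_trs :: "('f, 'v) trs \<Rightarrow> 'f set" where
  "funs_trs R = (\<Union>(l, r) \<in> R. funs_term l \<union> funs_term r)"

definition restrict_trs :: "('f, 'v) trs \<Rightarrow> ('f, 'v) trs \<Rightarrow> ('f, 'v) trs" where
  "restrict_trs R C = {(l, r) \<in> R. funs_term l \<subseteq> funs_trs C}"

definition variant :: "('f, 'v) rule \<Rightarrow> ('f, 'v) rule \<Rightarrow> bool" where
  "variant lr' lr \<longleftrightarrow> (\<exists>\<pi>. bij \<pi> \<and> fst lr' = subst (fst lr) (Var \<circ> \<pi>)
                                 \<and> snd lr' = subst (snd lr) (Var \<circ> \<pi>))"

definition is_unifier :: "('v \<Rightarrow> ('f, 'v) term) \<Rightarrow> ('f, 'v) term rel \<Rightarrow> bool" where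
  "is_unifier \<sigma> E \<longleftrightarrow> (\<forall>(s, t) \<in> E. subst s \<sigma> = subst t \<sigma>)"

definition is_mgu :: "('v \<Rightarrow> ('f, 'v) term) \<Rightarrow> ('f, 'v) term rel \<Rightarrow> bool" where
  "is_mgu \<sigma> E \<longleftrightarrow> is_unifier \<sigma> E \<and>
     (\<forall>\<tau>. is_unifier \<tau> E \<longrightarrow> (\<exists>\<delta>. \<forall>x. \<tau> x = subst (\<sigma> x) \<delta>))"

text \<open>Parallel critical pairs between R and R: main rule (l,r), rules rho p at positions p in P.\<close>
definition pcps :: "('f, 'v) trs \<Rightarrow> ('f, 'v) term rel" where
  "pcps R = {(replace_par (subst l \<sigma>) P (\<lambda>p. subst (snd (\<rho> p)) \<sigma>), subst r \<sigma>) | l r P \<rho> \<sigma>.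
      (\<exists>lr0 \<in> R. variant (l, r) lr0) \<and>
      (\<forall>p \<in> P. \<exists>lr0 \<in> R. variant (\<rho> p) lr0) \<and>
      (\<forall>p \<in> P. rule_vars (\<rho> p) \<inter> rule_vars (l, r) = {}) \<and>
      (\<forall>p \<in> P. \<forall>q \<in> P. p \<noteq> q \<longrightarrow> rule_vars (\<rho> p) \<inter> rule_vars (\<rho> q) = {}) \<and>
      P \<noteq> {} \<and> P \<subseteq> fun_poss l \<and>
      (\<forall>p \<in> P. \<forall>q \<in> P. p \<noteq> q \<longrightarrow> parallel_pos p q) \<and>
      is_mgu \<sigma> {(fst (\<rho> p), subt_at l p) | p. p \<in> P} \<and>
      (P = {[]} \<longrightarrow> \<not> variant (\<rho> []) (l, r))}"

end

theory Submission
  imports Defs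
begin


lemma subst_subst: "subst (subst t \<sigma>) \<tau> = subst t (\<lambda>x. subst (\<sigma> x) \<tau>)"
  by (induction t) auto

lemma subst_cong: "(\<And>x. x \<in> vars_term t \<Longrightarrow> \<sigma> x = \<tau> x) \<Longrightarrow> subst t \<sigma> = subst t \<tau>"
  by (induction t) auto

lemma subst_eq_vars: "subst t \<sigma> = subst t \<tau> \<Longrightarrow> x \<in> vars_term t \<Longrightarrow> \<sigma> x = \<tau> x"
  by (induction t) auto

lemma subst_Var[simp]: "subst t Var = t"
  by (induction t) (auto simp: map_idI)

lemma vars_subst: "vars_term (subst t \<sigma>) = (\<Union>x\<in>vars_term t. vars_term (\<sigma> x))"
  by (induction t) auto

lemma funs_subst_mono: "funs_term t \<subseteq> funs_term (subst t \<sigma>)"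
  by (induction t) auto

lemma funs_subst: "funs_term (subst t \<sigma>) = funs_term t \<union> (\<Union>x\<in>vars_term t. funs_term (\<sigma> x))"
  by (induction t) auto

lemma finite_vars[simp]: "finite (vars_term t)"
  by (induction t) auto

inductive rs :: "('f,'v) trs \<Rightarrow> ('f,'v) term \<Rightarrow> ('f,'v) term \<Rightarrow> bool" for R where
  root: "(l, r) \<in> R \<Longrightarrow> rs R (subst l \<sigma>) (subst r \<sigma>)"
| ctx: "i < length ts \<Longrightarrow> rs R (ts ! i) t \<Longrightarrow> rs R (Fun f ts) (Fun f (ts[i := t]))"

lemma rstep_rs: "rstep R = {(s, t). rs R s t}"
proof (intro set_eqI iffI; clarify)
  fix s t assume "(s, t) \<in> rstep R"
  then obtain l r p \<sigma> where lr: "(l, r) \<in> R" and p: "p \<in> poss s" "subt_at s p = subst l \<sigma>"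
    and t: "t = replace_at s p (subst r \<sigma>)" unfolding rstep_def by blast
  from p t show "rs R s t"
  proof (induction p arbitrary: s t)
    case Nil then show ?case using rs.root[OF lr] by simp
  next
    case (Cons i q)
    then obtain f ts where s: "s = Fun f ts" by (cases s) (auto simp: poss_def)
    with Cons show ?case
      by (auto simp: poss_def intro!: rs.ctx)
  qed
next
  fix s t assume "rs R s t"
  then show "(s, t) \<in> rstep R"
  proof induction
    case (root l r \<sigma>)
    then show ?case unfolding rstep_def
      by (intro CollectI case_prodI exI[of _ l] exI[of _ r] exI[of _ "[]"] exI[of _ \<sigma>]) (auto simp: poss_def)
  next
    case (ctx i ts t f)
    then obtain l r p \<sigma> where lr: "(l, r) \<in> R" and p: "p \<in> poss (ts!i)" "subt_at (ts!i) p = subst l \<sigma>"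
      and t: "t = replace_at (ts!i) p (subst r \<sigma>)" unfolding rstep_def by blast
    show ?case unfolding rstep_def using ctx(1) lr p t
      by (intro CollectI case_prodI exI[of _ l] exI[of _ r] exI[of _ "i # p"] exI[of _ \<sigma>]) (auto simp: poss_def)
  qed
qed

lemma rs_subst: "rs R s t \<Longrightarrow> rs R (subst s \<delta>) (subst t \<delta>)"
proof (induction rule: rs.induct)
  case (root l r \<sigma>)
  then show ?case using rs.root[OF root, of "\<lambda>x. subst (\<sigma> x) \<delta>"] by (simp add: subst_subst)
next
  case (ctx i ts t f)
  then show ?case using rs.ctx[of i "map (\<lambda>t. subst t \<delta>) ts" R "subst t \<delta>" f]
    by (simp add: map_update)
qed

lemma rs_mono: "rs R s t \<Longrightarrow> R \<subseteq> S \<Longrightarrow> rs S s t"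
  by (induction rule: rs.induct) (auto intro: rs.intros)

definition rsr where "rsr R = {(s,t). rs R s t}"

lemma rstep_rsr: "rstep R = rsr R" by (simp add: rstep_rs rsr_def)

lemma rsr_ctx: "(s, t) \<in> (rsr R)\<^sup>* \<Longrightarrow> i < length ts \<Longrightarrow> ts ! i = s \<Longrightarrow>
   (Fun f ts, Fun f (ts[i := t])) \<in> (rsr R)\<^sup>*"
proof (induction arbitrary: rule: rtrancl_induct)
  case base then show ?case by (metis list_update_id rtrancl.rtrancl_refl)
next
  case (step y z)
  then have "(Fun f ts, Fun f (ts[i := y])) \<in> (rsr R)\<^sup>*" by simp
  moreover have "(Fun f (ts[i := y]), Fun f (ts[i := z])) \<in> rsr R"
    using step rs.ctx[of i "ts[i:=y]" R z f] by (simp add: rsr_def)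
  ultimately show ?case by simp
qed

lemma rsr_subst: "(s, t) \<in> (rsr R)\<^sup>* \<Longrightarrow> (subst s \<delta>, subst t \<delta>) \<in> (rsr R)\<^sup>*"
proof (induction rule: rtrancl_induct)
  case (step y z)
  then have "(subst y \<delta>, subst z \<delta>) \<in> rsr R" by (simp add: rsr_def rs_subst)
  with step(3) show ?case by simp
qed simp

lemma args_rtrancl:
  assumes ctx: "\<And>ts i t. i < length ts \<Longrightarrow> (ts ! i, t) \<in> S \<Longrightarrow> (Fun f ts, Fun f (ts[i:=t])) \<in> S'"
  shows "list_all2 (\<lambda>a b. (a,b) \<in> S\<^sup>*) as bs \<Longrightarrow> (Fun f (pre @ as), Fun f (pre @ bs)) \<in> S'\<^sup>*"
proof (induction as bs arbitrary: pre rule: list_all2_induct)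
  case Nil then show ?case by simp
next
  case (Cons a as b bs)
  have 1: "(Fun f (pre @ a # as), Fun f (pre @ b # as)) \<in> S'\<^sup>*"
    using Cons(1)
  proof (induction rule: rtrancl_induct)
    case (step y z)
    have "(Fun f (pre @ y # as), Fun f ((pre @ y # as)[length pre := z])) \<in> S'"
      by (rule ctx) (use step in auto)
    then show ?case using step by (auto elim: rtrancl_into_rtrancl)
  qed simp
  have "(Fun f ((pre @ [b]) @ as), Fun f ((pre @ [b]) @ bs)) \<in> S'\<^sup>*" by (rule Cons(3))
  with 1 show ?case by auto
qed

lemma args_rtrancl0:
  assumes "\<And>ts i t. i < length ts \<Longrightarrow> (ts ! i, t) \<in> S \<Longrightarrow> (Fun f ts, Fun f (ts[i:=t])) \<in> S'"
  shows "list_all2 (\<lambda>a b. (a,b) \<in> S\<^sup>*) as bs \<Longrightarrow> (Fun f as, Fun f bs) \<in> S'\<^sup>*"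
  using args_rtrancl[OF assms, where pre="[]"] by simp

lemma conv_rsr: "conv R = (rsr R \<union> (rsr R)\<inverse>)\<^sup>*"
  by (simp add: conv_def rstep_rsr)

lemma conv_refl[simp]: "(t, t) \<in> conv R" by (simp add: conv_def)

lemma conv_sym: "(s, t) \<in> conv R \<Longrightarrow> (t, s) \<in> conv R"
  unfolding conv_def
  by (metis converse_Un converse_converse converse_iff rtrancl_converseI sup_commute)

lemma conv_trans: "(s, t) \<in> conv R \<Longrightarrow> (t, u) \<in> conv R \<Longrightarrow> (s, u) \<in> conv R"
  unfolding conv_def by simp

lemma steps_conv: "(s, t) \<in> (rsr R)\<^sup>* \<Longrightarrow> (s, t) \<in> conv R"
  unfolding conv_rsr by (meson in_rtrancl_UnI)

lemma conv_subst: "(s, t) \<in> conv R \<Longrightarrow> (subst s \<delta>, subst t \<delta>) \<in> conv R"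
  unfolding conv_rsr
proof (induction rule: rtrancl_induct)
  case (step y z)
  then have "(subst y \<delta>, subst z \<delta>) \<in> rsr R \<union> (rsr R)\<inverse>"
    by (auto simp: rsr_def intro: rs_subst)
  with step show ?case by (meson rtrancl.simps)
qed simp

lemma conv_args: "list_all2 (\<lambda>a b. (a,b) \<in> conv R) as bs \<Longrightarrow> (Fun f as, Fun f bs) \<in> conv R"
proof -
  assume a: "list_all2 (\<lambda>a b. (a,b) \<in> conv R) as bs"
  have "(Fun f as, Fun f bs) \<in> (rsr R \<union> (rsr R)\<inverse>)\<^sup>*"
  proof (rule args_rtrancl0[where S = "rsr R \<union> (rsr R)\<inverse>"])
    fix ts i t assume "i < length ts" "(ts ! i, t) \<in> rsr R \<union> (rsr R)\<inverse>"
    show "(Fun f ts, Fun f (ts[i := t])) \<in> rsr R \<union> (rsr R)\<inverse>"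
    proof (cases "(ts ! i, t) \<in> rsr R")
      case True with \<open>i < length ts\<close> show ?thesis by (auto simp: rsr_def intro: rs.ctx)
    next
      case False
      then have "(ts ! i, t) \<in> (rsr R)\<inverse>" using \<open>(ts ! i, t) \<in> rsr R \<union> (rsr R)\<inverse>\<close> by blast
      then have "rs R t (ts!i)" by (simp add: rsr_def)
      then have "rs R ((ts[i:=t]) ! i) (ts ! i)" using \<open>i < length ts\<close> by simp
      from rs.ctx[OF _ this, of f] \<open>i < length ts\<close>
      show ?thesis by (simp add: rsr_def)
    qed
  qed (use a in \<open>simp add: conv_rsr\<close>)
  then show ?thesis by (simp add: conv_rsr)
qed

lemma confluent_rsr: "confluent R \<longleftrightarrow> ((rsr R)\<^sup>*)\<inverse> O (rsr R)\<^sup>* \<subseteq> (rsr R)\<^sup>* O ((rsr R)\<^sup>*)\<inverse>"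
  by (simp add: confluent_def rstep_rsr)

lemma CR_conv:
  assumes "confluent R" "(s, t) \<in> conv R"
  shows "\<exists>u. (s, u) \<in> (rsr R)\<^sup>* \<and> (t, u) \<in> (rsr R)\<^sup>*"
  using assms(2) unfolding conv_rsr
proof (induction rule: rtrancl_induct)
  case base then show ?case by blast
next
  case (step y z)
  then obtain u where u: "(s, u) \<in> (rsr R)\<^sup>*" "(y, u) \<in> (rsr R)\<^sup>*" by blast
  from step(2) show ?case
  proof
    assume "(y, z) \<in> rsr R"
    then have "(y, z) \<in> (rsr R)\<^sup>*" by simp
    with u(2) assms(1) obtain w where "(u, w) \<in> (rsr R)\<^sup>*" "(z, w) \<in> (rsr R)\<^sup>*"
      unfolding confluent_rsr by blast
    with u(1) show ?thesis by (meson rtrancl_trans)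
  next
    assume "(y, z) \<in> (rsr R)\<inverse>"
    with u show ?thesis by (meson converseD converse_rtrancl_into_rtrancl)
  qed
qed

lemma diamond_local:
  assumes dia: "\<And>a b c. a \<in> T \<Longrightarrow> (a, b) \<in> D \<Longrightarrow> (a, c) \<in> D \<Longrightarrow> \<exists>d. (b, d) \<in> D \<and> (c, d) \<in> D"
    and clo: "\<And>a b. a \<in> T \<Longrightarrow> (a, b) \<in> D \<Longrightarrow> b \<in> T"
  shows "a \<in> T \<Longrightarrow> (a, b) \<in> D\<^sup>* \<Longrightarrow> (a, c) \<in> D\<^sup>* \<Longrightarrow> \<exists>d. (b, d) \<in> D\<^sup>* \<and> (c, d) \<in> D\<^sup>*"
proof -
  have clo': "(a, b) \<in> D\<^sup>* \<Longrightarrow> a \<in> T \<Longrightarrow> b \<in> T" for a b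
    by (induction rule: rtrancl_induct) (auto intro: clo)
  have strip: "(a, c) \<in> D\<^sup>* \<Longrightarrow> a \<in> T \<Longrightarrow> (a, b) \<in> D \<Longrightarrow> \<exists>d. (b, d) \<in> D\<^sup>* \<and> (c, d) \<in> D" for a b c
  proof (induction arbitrary: b rule: rtrancl_induct)
    case base then show ?case by blast
  next
    case (step y z)
    then obtain d where d: "(b, d) \<in> D\<^sup>*" "(y, d) \<in> D" by blast
    have "y \<in> T" using clo' step by blast
    from dia[OF this d(2) step(2)] obtain e where "(d, e) \<in> D" "(z, e) \<in> D" by blast
    with d show ?case by (meson rtrancl.simps)
  qed
  have main: "(a, b) \<in> D\<^sup>* \<Longrightarrow> a \<in> T \<Longrightarrow> (a, c) \<in> D\<^sup>* \<Longrightarrow> \<exists>d. (b, d) \<in> D\<^sup>* \<and> (c, d) \<in> D\<^sup>*" for b c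
  proof (induction arbitrary: c rule: rtrancl_induct)
    case base then show ?case by blast
  next
    case (step y z)
    then obtain d where d: "(y, d) \<in> D\<^sup>*" "(c, d) \<in> D\<^sup>*" by blast
    have "y \<in> T" using clo' step by blast
    from strip[OF d(1) this step(2)] obtain e where "(z, e) \<in> D\<^sup>*" "(d, e) \<in> D" by blast
    with d show ?case by (meson rtrancl.simps)
  qed
  show "a \<in> T \<Longrightarrow> (a, b) \<in> D\<^sup>* \<Longrightarrow> (a, c) \<in> D\<^sup>* \<Longrightarrow> \<exists>d. (b, d) \<in> D\<^sup>* \<and> (c, d) \<in> D\<^sup>*"
    using main by blast
qed



definition eqvars :: "(('f,'v) term \<times> ('f,'v) term) list \<Rightarrow> 'v set" where
  "eqvars es = (\<Union>(s,t)\<in>set es. vars_term s \<union> vars_term t)"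

definition eqsize :: "(('f,'v) term \<times> ('f,'v) term) list \<Rightarrow> nat" where
  "eqsize es = sum_list (map (\<lambda>(s,t). size s + size t + 1) es)"

lemma finite_eqvars[simp]: "finite (eqvars es)"
  by (auto simp: eqvars_def)

lemma size_subst_var: "x \<in> vars_term t \<Longrightarrow> size (\<sigma> x) \<le> size (subst t \<sigma>)"
proof (induction t)
  case (Var y) then show ?case by simp
next
  case (Fun f ts)
  then obtain u where u: "u \<in> set ts" "x \<in> vars_term u" by auto
  with Fun have "size (\<sigma> x) \<le> size (subst u \<sigma>)" by auto
  also have "\<dots> \<le> size_list size (map (\<lambda>t. subst t \<sigma>) ts)"
    using u(1) by (simp add: size_list_estimation')
  finally show ?case by simp
qed

lemma occurs: "x \<in> vars_term t \<Longrightarrow> t \<noteq> Var x \<Longrightarrow> subst t \<sigma> \<noteq> \<sigma> x"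
proof (cases t)
  case (Var y) then show "x \<in> vars_term t \<Longrightarrow> t \<noteq> Var x \<Longrightarrow> subst t \<sigma> \<noteq> \<sigma> x" by simp
next
  case (Fun f ts)
  assume x: "x \<in> vars_term t"
  with Fun obtain u where u: "u \<in> set ts" "x \<in> vars_term u" by auto
  have "size (\<sigma> x) \<le> size (subst u \<sigma>)" using size_subst_var[OF u(2)] .
  also have "\<dots> \<le> size_list size (map (\<lambda>t. subst t \<sigma>) ts)"
    using u(1) by (simp add: size_list_estimation')
  finally have "size (\<sigma> x) < size (subst t \<sigma>)" using Fun by simp
  then show "subst t \<sigma> \<noteq> \<sigma> x" by auto
qed

lemma unif_Cons: "is_unifier \<sigma> (set ((s,t)#es)) \<longleftrightarrow> subst s \<sigma> = subst t \<sigma> \<and> is_unifier \<sigma> (set es)"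
  by (auto simp: is_unifier_def)

lemma unif_insert[simp]: "is_unifier \<sigma> (insert (s,t) E) \<longleftrightarrow> subst s \<sigma> = subst t \<sigma> \<and> is_unifier \<sigma> E"
  by (auto simp: is_unifier_def)

lemma mgu_var_step:
  assumes nx: "x \<notin> vars_term t"
    and IH: "\<And>\<theta>. is_unifier \<theta> (set es') \<Longrightarrow> \<exists>\<mu>. is_mgu \<mu> (set es')"
    and es': "es' = map (\<lambda>(a,b). (subst a (Var(x:=t)), subst b (Var(x:=t)))) es"
    and u: "is_unifier \<theta> (set ((Var x, t) # es))"
  shows "\<exists>\<mu>. is_mgu \<mu> (set ((Var x, t) # es))"
proof -
  let ?s = "Var(x:=t)"
  have key: "is_unifier \<tau> (set ((Var x, t) # es)) \<Longrightarrow> (\<lambda>y. subst (?s y) \<tau>) = \<tau>" for \<tau>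
    by (auto simp: is_unifier_def)
  have tr: "is_unifier \<tau> (set es') \<longleftrightarrow> is_unifier (\<lambda>y. subst (?s y) \<tau>) (set es)" for \<tau>
    by (auto simp: is_unifier_def es' subst_subst)
  have "is_unifier \<theta> (set es)" using u by simp
  then have "is_unifier \<theta> (set es')" using tr[of \<theta>] key[OF u] by simp
  from IH[OF this] obtain \<mu>' where m: "is_mgu \<mu>' (set es')" by blast
  define \<mu> where "\<mu> = (\<lambda>y. subst (?s y) \<mu>')"
  have tmu: "subst t \<mu> = subst t \<mu>'"
    by (rule subst_cong) (use nx in \<open>auto simp: \<mu>_def\<close>)
  have "is_unifier \<mu> (set ((Var x, t) # es))"
    using m tr[of \<mu>'] tmu by (auto simp: is_mgu_def unif_Cons \<mu>_def)
  moreover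
  have "\<exists>\<delta>. \<forall>y. \<tau> y = subst (\<mu> y) \<delta>" if tu: "is_unifier \<tau> (set ((Var x, t) # es))" for \<tau>
  proof -
    have "is_unifier \<tau> (set es)" using tu by simp
    then have "is_unifier \<tau> (set es')" using tr[of \<tau>] key[OF tu] by simp
    with m obtain \<delta> where d: "\<forall>y. \<tau> y = subst (\<mu>' y) \<delta>" by (auto simp: is_mgu_def)
    have "\<tau> y = subst (\<mu> y) \<delta>" for y
    proof (cases "y = x")
      case True
      have "\<tau> x = subst t \<tau>" using tu by (simp add: unif_Cons)
      also have "\<dots> = subst t (\<lambda>y. subst (\<mu>' y) \<delta>)" using d by (metis ext)
      also have "\<dots> = subst (\<mu> x) \<delta>" by (simp add: \<mu>_def subst_subst)
      finally show ?thesis using True by simp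
    next
      case False then show ?thesis using d by (simp add: \<mu>_def)
    qed
    then show ?thesis by blast
  qed
  ultimately show ?thesis by (auto simp: is_mgu_def)
qed

lemma eqvars_Cons: "eqvars ((s,t)#es) = vars_term s \<union> vars_term t \<union> eqvars es"
  by (auto simp: eqvars_def)

lemma eqvars_subst_var:
  assumes "x \<notin> vars_term t"
  shows "eqvars (map (\<lambda>(a,b). (subst a (Var(x:=t)), subst b (Var(x:=t)))) es) \<subseteq> eqvars es \<union> vars_term t - {x}"
  using assms by (auto simp: eqvars_def vars_subst split: if_splits)

lemma mgu_exists_list: "is_unifier \<theta> (set es) \<Longrightarrow> \<exists>\<mu>. is_mgu \<mu> (set es)"
proof (induction es arbitrary: \<theta> rule: wf_induct[OF wf_measures[of "[\<lambda>es. card (eqvars es), eqsize]"]])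
  case (1 es)
  note IH = 1(1) and u = 1(2)
  show ?case
  proof (cases es)
    case Nil
    have "is_mgu Var (set es)" using Nil by (simp add: is_mgu_def is_unifier_def) blast
    then show ?thesis by blast
  next
    case (Cons e es0)
    obtain s t where e: "e = (s,t)" by (cases e)
    have le0: "card (eqvars es0) \<le> card (eqvars es)"
      by (rule card_mono) (auto simp: Cons e eqvars_Cons)
    show ?thesis
    proof (cases "s = t")
      case True
      have "(es0, es) \<in> measures [\<lambda>es. card (eqvars es), eqsize]"
        using le0 by (auto simp: measures_def Cons e eqsize_def)
      moreover have "is_unifier \<theta> (set es0)" using u by (simp add: Cons e unif_Cons)
      ultimately obtain \<mu> where "is_mgu \<mu> (set es0)" using IH by blast
      then show ?thesis using True by (auto simp: is_mgu_def Cons e unif_Cons)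
    next
      case neq: False
      have var_case: "\<exists>\<mu>. is_mgu \<mu> (set ((Var x, t') # es0))"
        if ut: "is_unifier \<theta> (set ((Var x, t') # es0))" and neq: "Var x \<noteq> t'"
        and vs: "eqvars ((Var x, t') # es0) = eqvars es"
        and sz: "eqsize ((Var x, t') # es0) = eqsize es" for x t'
      proof -
        have nx: "x \<notin> vars_term t'"
          using occurs[of x t' \<theta>] ut neq by (auto simp: unif_Cons)
        define es' where "es' = map (\<lambda>(a,b). (subst a (Var(x:=t')), subst b (Var(x:=t')))) es0"
        have "eqvars es' \<subseteq> eqvars es - {x}"
          using eqvars_subst_var[OF nx, of es0] vs by (auto simp: es'_def eqvars_Cons)
        moreover have "x \<in> eqvars es" using vs by (auto simp: eqvars_Cons)
        ultimately have "card (eqvars es') < card (eqvars es)"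
          by (metis card_Diff1_less card_mono finite_Diff finite_eqvars le_less_trans)
        then have "(es', es) \<in> measures [\<lambda>es. card (eqvars es), eqsize]" by auto
        then have "\<And>\<theta>'. is_unifier \<theta>' (set es') \<Longrightarrow> \<exists>\<mu>. is_mgu \<mu> (set es')" using IH by blast
        from mgu_var_step[OF nx this es'_def ut] show ?thesis .
      qed
      show ?thesis
      proof (cases s)
        case (Var x)
        show ?thesis using var_case[of x t] u neq by (simp add: Cons e Var)
      next
        case (Fun f ss)
        note sF = Fun
        show ?thesis
        proof (cases t)
          case (Var x)
          have u': "is_unifier \<theta> (set ((Var x, s) # es0))" using u by (auto simp: Cons e Var unif_Cons)
          have "\<exists>\<mu>. is_mgu \<mu> (set ((Var x, s) # es0))"
            by (rule var_case[OF u']) (use neq Var in \<open>auto simp: Cons e eqvars_Cons eqsize_def\<close>)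
          then obtain \<mu> where m: "is_mgu \<mu> (set ((Var x, s) # es0))" by blast
          have un: "is_unifier \<tau> (set ((Var x, s) # es0)) \<longleftrightarrow> is_unifier \<tau> (set es)" for \<tau>
            by (auto simp: is_unifier_def Cons e Var)
          have "is_mgu \<mu> (set es)" using m unfolding is_mgu_def un .
          then show ?thesis by blast
        next
          case (Fun g ts)
          from u have eq: "f = g" "map (\<lambda>t. subst t \<theta>) ss = map (\<lambda>t. subst t \<theta>) ts"
            by (auto simp: Cons e sF Fun unif_Cons)
          then have len: "length ss = length ts" by (metis length_map)
          define es' where "es' = zip ss ts @ es0"
          have un: "is_unifier \<tau> (set es') \<longleftrightarrow> is_unifier \<tau> (set es)" for \<tau>
          proof -
            have "(\<forall>(a,b)\<in>set (zip ss ts). subst a \<tau> = subst b \<tau>) \<longleftrightarrow> map (\<lambda>t. subst t \<tau>) ss = map (\<lambda>t. subst t \<tau>) ts"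
              using len by (auto simp: list_eq_iff_nth_eq set_zip)
            then show ?thesis using eq(1) by (auto simp: is_unifier_def es'_def Cons e sF Fun)
          qed
          have v: "eqvars es' = eqvars es"
          proof -
            have "(\<Union>(a,b)\<in>set (zip ss ts). vars_term a \<union> vars_term b) = (\<Union>a\<in>set ss. vars_term a) \<union> (\<Union>b\<in>set ts. vars_term b)"
              using len by (induction ss ts rule: list_induct2) auto
            then show ?thesis by (auto simp: eqvars_def es'_def Cons e sF Fun eq(1))
          qed
          have "eqsize (zip ss ts) \<le> size_list size ss + size_list size ts"
            using len
          proof (induction ss ts rule: list_induct2)
            case Nil then show ?case by (simp add: eqsize_def)
          next
            case (Cons x xs y ys) then show ?case by (simp add: eqsize_def)
          qed
          then have "eqsize es' < eqsize es"
            by (simp add: es'_def Cons e sF Fun eqsize_def)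
          then have "(es', es) \<in> measures [\<lambda>es. card (eqvars es), eqsize]" using v by auto
          moreover have "is_unifier \<theta> (set es')" using un u by simp
          ultimately obtain \<mu> where "is_mgu \<mu> (set es')" using IH by blast
          then show ?thesis using un by (auto simp: is_mgu_def)
        qed
      qed
    qed
  qed
qed

lemma mgu_exists: "finite E \<Longrightarrow> is_unifier \<theta> E \<Longrightarrow> \<exists>\<mu>. is_mgu \<mu> E"
  by (metis finite_list mgu_exists_list)



lemma poss_Var[simp]: "poss (Var x) = {[]}"
  by (auto simp: poss_def elim: valid_pos.elims)

lemma poss_Fun: "poss (Fun f ts) = insert [] {i # q | i q. i < length ts \<and> q \<in> poss (ts ! i)}"
  by (auto simp: poss_def elim: valid_pos.elims)

lemma Nil_poss[simp]: "[] \<in> poss t" by (simp add: poss_def)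

lemma Cons_poss_Fun[simp]: "i # q \<in> poss (Fun f ts) \<longleftrightarrow> i < length ts \<and> q \<in> poss (ts ! i)"
  by (simp add: poss_def)

lemma finite_poss: "finite (poss t)"
proof (induction t)
  case (Var x) then show ?case by simp
next
  case (Fun f ts)
  have "{i # q | i q. i < length ts \<and> q \<in> poss (ts ! i)} = (\<Union>i<length ts. (Cons i) ` poss (ts ! i))"
    by auto
  moreover have "finite (\<Union>i<length ts. (Cons i) ` poss (ts ! i))"
    using Fun by auto
  ultimately show ?case by (simp add: poss_Fun)
qed

lemma vars_subt_at: "p \<in> poss t \<Longrightarrow> vars_term (subt_at t p) \<subseteq> vars_term t"
proof (induction p arbitrary: t)
  case Nil then show ?case by simp
next
  case (Cons i q)
  then obtain f ts where t: "t = Fun f ts" by (cases t) auto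
  with Cons have "vars_term (subt_at (ts ! i) q) \<subseteq> vars_term (ts ! i)" "i < length ts" by auto
  then show ?case using nth_mem by (fastforce simp: t)
qed

lemma vars_poss: "x \<in> vars_term t \<longleftrightarrow> (\<exists>p \<in> poss t. subt_at t p = Var x)"
proof (induction t)
  case (Var y) then show ?case by auto
next
  case (Fun f ts)
  show ?case
  proof
    assume "x \<in> vars_term (Fun f ts)"
    then obtain i where i: "i < length ts" "x \<in> vars_term (ts ! i)" by (auto simp: in_set_conv_nth)
    with Fun obtain p where "p \<in> poss (ts ! i)" "subt_at (ts ! i) p = Var x" by (meson nth_mem)
    with i show "\<exists>p \<in> poss (Fun f ts). subt_at (Fun f ts) p = Var x" by (intro bexI[of _ "i # p"]) auto
  next
    assume "\<exists>p \<in> poss (Fun f ts). subt_at (Fun f ts) p = Var x"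
    then obtain p where p: "p \<in> poss (Fun f ts)" "subt_at (Fun f ts) p = Var x" by blast
    then obtain i q where "p = i # q" by (cases p) auto
    with p Fun show "x \<in> vars_term (Fun f ts)" by (auto simp: in_set_conv_nth) (metis nth_mem)
  qed
qed

lemma fun_poss_Fun_Nil[simp]: "[] \<in> fun_poss (Fun f ts)"
  by (simp add: fun_poss_def)

lemma fun_poss_Cons[simp]: "i # q \<in> fun_poss (Fun f ts) \<longleftrightarrow> i < length ts \<and> q \<in> fun_poss (ts ! i)"
  by (simp add: fun_poss_def)

lemma fun_poss_Var[simp]: "fun_poss (Var x) = {}"
  by (simp add: fun_poss_def)

lemma fun_poss_poss: "fun_poss t \<subseteq> poss t" by (auto simp: fun_poss_def)

lemma poss_subst: "p \<in> poss t \<Longrightarrow> p \<in> poss (subst t \<sigma>)"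
proof (induction p arbitrary: t)
  case Nil then show ?case by simp
next
  case (Cons i q) then show ?case by (cases t) auto
qed

lemma pos_prefix_Cons: "pos_prefix (i # p) (j # q) \<longleftrightarrow> i = j \<and> pos_prefix p q"
  by (auto simp: pos_prefix_def)

lemma parallel_Cons: "parallel_pos (i # p) (j # q) \<longleftrightarrow> i \<noteq> j \<or> parallel_pos p q"
  by (auto simp: parallel_pos_def pos_prefix_Cons)

fun lin :: "('f,'v) term \<Rightarrow> bool" where
  "lin (Var x) = True"
| "lin (Fun f ts) = ((\<forall>t\<in>set ts. lin t) \<and>
     (\<forall>i<length ts. \<forall>j<length ts. i \<noteq> j \<longrightarrow> vars_term (ts ! i) \<inter> vars_term (ts ! j) = {}))"

lemma lin_pos: "(\<forall>p\<in>poss t. \<forall>q\<in>poss t. \<forall>x. subt_at t p = Var x \<and> subt_at t q = Var x \<longrightarrow> p = q) \<Longrightarrow> lin t"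
proof (induction t)
  case (Var x) then show ?case by simp
next
  case (Fun f ts)
  have "lin t" if t: "t \<in> set ts" for t
  proof -
    from t obtain i where i: "i < length ts" "t = ts ! i" by (auto simp: in_set_conv_nth)
    have "\<forall>p\<in>poss t. \<forall>q\<in>poss t. \<forall>x. subt_at t p = Var x \<and> subt_at t q = Var x \<longrightarrow> p = q"
    proof (intro ballI allI impI)
      fix p q x
      assume pq: "p \<in> poss t" "q \<in> poss t" "subt_at t p = Var x \<and> subt_at t q = Var x"
      have "i # p \<in> poss (Fun f ts)" "i # q \<in> poss (Fun f ts)" using pq i by auto
      moreover have "subt_at (Fun f ts) (i # p) = Var x" "subt_at (Fun f ts) (i # q) = Var x" using pq i by auto
      ultimately have "i # p = i # q" using Fun(2) by blast
      then show "p = q" by simp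
    qed
    with Fun(1) t show ?thesis by blast
  qed
  moreover have "vars_term (ts ! i) \<inter> vars_term (ts ! j) = {}"
    if "i < length ts" "j < length ts" "i \<noteq> j" for i j
  proof (rule ccontr)
    assume "vars_term (ts ! i) \<inter> vars_term (ts ! j) \<noteq> {}"
    then obtain x where "x \<in> vars_term (ts ! i)" "x \<in> vars_term (ts ! j)" by blast
    then obtain p q where pq: "p \<in> poss (ts ! i)" "subt_at (ts ! i) p = Var x"
      "q \<in> poss (ts ! j)" "subt_at (ts ! j) q = Var x" by (meson vars_poss)
    have "i # p \<in> poss (Fun f ts)" "j # q \<in> poss (Fun f ts)" using pq that by auto
    moreover have "subt_at (Fun f ts) (i # p) = Var x" "subt_at (Fun f ts) (j # q) = Var x" using pq by auto
    ultimately have "i # p = j # q" using Fun(2) by blast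
    with that show False by simp
  qed
  ultimately show ?case by auto
qed

lemma left_linear_lin: "left_linear R \<Longrightarrow> (l, r) \<in> R \<Longrightarrow> lin l"
proof -
  assume a: "left_linear R" "(l, r) \<in> R"
  from a(1) have "\<forall>lr\<in>R. case lr of (l, r) \<Rightarrow> \<forall>p\<in>poss l. \<forall>q\<in>poss l. \<forall>x.
      subt_at l p = Var x \<and> subt_at l q = Var x \<longrightarrow> p = q" unfolding left_linear_def .
  from bspec[OF this a(2)] show "lin l" by (intro lin_pos) simp
qed

section \<open>parallel rewriting\<close>

inductive par :: "('f,'v) trs \<Rightarrow> ('f,'v) term \<Rightarrow> ('f,'v) term \<Rightarrow> bool" for R where
  pvar: "par R (Var x) (Var x)"
| pfun: "list_all2 (par R) ss ts \<Longrightarrow> par R (Fun f ss) (Fun f ts)"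
| proot: "(l, r) \<in> R \<Longrightarrow> par R (subst l \<sigma>) (subst r \<sigma>)"

lemma par_refl[simp]: "par R t t"
proof (induction t)
  case (Var x) then show ?case by (rule pvar)
next
  case (Fun f ts) then show ?case by (auto intro!: pfun simp: list_all2_same)
qed

lemma par_subst_pw: "(\<And>x. x \<in> vars_term t \<Longrightarrow> par R (\<sigma> x) (\<tau> x)) \<Longrightarrow> par R (subst t \<sigma>) (subst t \<tau>)"
proof (induction t)
  case (Var x) then show ?case by simp
next
  case (Fun f ts) then show ?case
    by (auto intro!: pfun simp: list_all2_conv_all_nth) (metis nth_mem)
qed

lemma rs_par: "rs R s t \<Longrightarrow> par R s t"
proof (induction rule: rs.induct)
  case (root l r \<sigma>) then show ?case by (rule proot)
next
  case (ctx i ts t f) then show ?case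
    by (auto intro!: pfun simp: list_all2_conv_all_nth nth_list_update)
qed

lemma par_rsr: "par R s t \<Longrightarrow> (s, t) \<in> (rsr R)\<^sup>*"
proof (induction rule: par.induct)
  case (pvar x) then show ?case by simp
next
  case (pfun ss ts f)
  have "list_all2 (\<lambda>a b. (a,b) \<in> (rsr R)\<^sup>*) ss ts"
    using pfun by (auto simp: list_all2_conv_all_nth)
  then show ?case
    by (rule args_rtrancl0[rotated]) (auto simp: rsr_def intro: rs.ctx)
next
  case (proot l r \<sigma>) then show ?case by (auto simp: rsr_def intro: rs.root)
qed

lemma par_mono: "par R s t \<Longrightarrow> R \<subseteq> S \<Longrightarrow> par S s t"
proof (induction rule: par.induct)
  case (pfun ss ts f) then show ?case by (auto intro!: par.pfun simp: list_all2_conv_all_nth)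
next
  case (pvar x) show ?case by (rule par.pvar)
next
  case (proot l r \<sigma>) then show ?case by (intro par.proot) blast
qed

lemma rpl_length[simp]: "length (replace_par_list k ts P g) = length ts"
  by (induction ts arbitrary: k) auto

lemma rpl_nth: "j < length ts \<Longrightarrow>
  replace_par_list k ts P g ! j = replace_par (ts ! j) {q. (k + j) # q \<in> P} (\<lambda>q. g ((k + j) # q))"
proof (induction ts arbitrary: k j)
  case Nil then show ?case by simp
next
  case (Cons t ts) then show ?case by (cases j) auto
qed

lemma replace_par_Fun: "[] \<notin> P \<Longrightarrow> replace_par (Fun f ts) P g =
   Fun f (map (\<lambda>j. replace_par (ts ! j) {q. j # q \<in> P} (\<lambda>q. g (j # q))) [0..<length ts])"
  apply (simp only: replace_par.simps if_False term.inject simp_thms)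
  apply (rule nth_equalityI)
   apply simp
  apply (simp add: rpl_nth)
  done

lemma replace_par_empty[simp]: "replace_par t {} g = t"
proof (induction t arbitrary: g)
  case (Var x) then show ?case by simp
next
  case (Fun f ts) then show ?case by (simp add: rpl_nth list_eq_iff_nth_eq)
qed

lemma replace_par_root: "[] \<in> P \<Longrightarrow> replace_par t P g = g []"
  by (cases t) auto

lemma replace_par_cong: "(\<And>p. p \<in> P \<Longrightarrow> g p = h p) \<Longrightarrow> replace_par t P g = replace_par t P h"
proof (induction t arbitrary: P g h)
  case (Var x) then show ?case by simp
next
  case (Fun f ts)
  show ?case
  proof (cases "[] \<in> P")
    case True then show ?thesis using Fun by simp
  next
    case False
    have "replace_par (ts ! j) {q. j # q \<in> P} (\<lambda>q. g (j # q)) = replace_par (ts ! j) {q. j # q \<in> P} (\<lambda>q. h (j # q))"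
      if "j < length ts" for j
      by (rule Fun(1)) (use Fun(2) that in auto)
    then show ?thesis using False by (simp add: rpl_nth list_eq_iff_nth_eq)
  qed
qed

lemma subst_replace_par: "P \<subseteq> poss t \<Longrightarrow>
  subst (replace_par t P g) \<delta> = replace_par (subst t \<delta>) P (\<lambda>p. subst (g p) \<delta>)"
proof (induction t arbitrary: P g)
  case (Var x)
  then have "P = {} \<or> P = {[]}" by auto
  then show ?case by (auto simp: replace_par_root)
next
  case (Fun f ts)
  show ?case
  proof (cases "[] \<in> P")
    case True then show ?thesis by simp
  next
    case False
    have "subst (replace_par (ts ! j) {q. j # q \<in> P} (\<lambda>q. g (j # q))) \<delta> =
          replace_par (subst (ts ! j) \<delta>) {q. j # q \<in> P} (\<lambda>q. subst (g (j # q)) \<delta>)"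
      if j: "j < length ts" for j
    proof (rule Fun(1))
      show "ts ! j \<in> set ts" using j by simp
      show "{q. j # q \<in> P} \<subseteq> poss (ts ! j)" using Fun(2) j by auto
    qed
    then show ?thesis using False by (simp add: rpl_nth list_eq_iff_nth_eq)
  qed
qed



definition DEC :: "('f,'v) trs \<Rightarrow> ('f,'v) term \<Rightarrow> ('v \<Rightarrow> ('f,'v) term) \<Rightarrow> ('f,'v) term \<Rightarrow>
   pos set \<Rightarrow> (pos \<Rightarrow> ('f,'v) term) \<Rightarrow> ('v \<Rightarrow> ('f,'v) term) \<Rightarrow> bool" where
  "DEC R' l \<sigma> t P g \<sigma>' \<longleftrightarrow> P \<subseteq> fun_poss l \<and> (\<forall>p\<in>P. \<forall>q\<in>P. p \<noteq> q \<longrightarrow> parallel_pos p q) \<and>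
    (\<forall>p\<in>P. \<exists>l' r' \<tau>. (l', r') \<in> R' \<and> subst l' \<tau> = subst (subt_at l p) \<sigma> \<and> g p = subst r' \<tau>) \<and>
    t = replace_par (subst l \<sigma>') P g \<and> (\<forall>x\<in>vars_term l. par R' (\<sigma> x) (\<sigma>' x)) \<and>
    (\<forall>p\<in>P. \<forall>x\<in>vars_term (subt_at l p). \<sigma>' x = \<sigma> x)"

lemma dec: "par R' (subst l \<sigma>) t \<Longrightarrow> lin l \<Longrightarrow> \<exists>P g \<sigma>'. DEC R' l \<sigma> t P g \<sigma>'"
proof (induction l arbitrary: t)
  case (Var x)
  show ?case
    by (rule exI[of _ "{}"], rule exI[of _ "\<lambda>_. t"], rule exI[of _ "\<sigma>(x := t)"]) (use Var in \<open>auto simp: DEC_def\<close>)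
next
  case (Fun f ls)
  from Fun.prems(1) show ?case
  proof (cases rule: par.cases)
    case (pvar x) then show ?thesis by simp
  next
    case (proot l' r' \<tau>)
    show ?thesis
      apply (rule exI[of _ "{[]}"], rule exI[of _ "\<lambda>_. t"], rule exI[of _ \<sigma>])
      using proot by (auto simp: replace_par_root DEC_def)
  next
    case (pfun ss ts f')
    have ff: "f' = f" "t = Fun f ts" using pfun by auto
    define n where "n = length ls"
    have ss: "ss = map (\<lambda>t. subst t \<sigma>) ls" using pfun by simp
    have len: "length ts = n" using pfun(3) ss by (metis length_map list_all2_lengthD n_def)
    have pari: "par R' (subst (ls ! i) \<sigma>) (ts ! i)" if "i < n" for i
      using pfun(3) ss that by (auto simp: list_all2_conv_all_nth n_def)
    have lini: "lin (ls ! i)" if "i < n" for i using Fun.prems(2) that by (simp add: n_def)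
    have "\<forall>i. \<exists>X. i < n \<longrightarrow> DEC R' (ls ! i) \<sigma> (ts ! i) (fst X) (fst (snd X)) (snd (snd X))"
    proof
      fix i show "\<exists>X. i < n \<longrightarrow> DEC R' (ls ! i) \<sigma> (ts ! i) (fst X) (fst (snd X)) (snd (snd X))"
      proof (cases "i < n")
        case True
        have "\<exists>P g \<sigma>'. DEC R' (ls ! i) \<sigma> (ts ! i) P g \<sigma>'"
          using Fun.IH[of "ls ! i" "ts ! i"] pari[OF True] lini[OF True] True by (simp add: n_def)
        then obtain P g \<sigma>' where "DEC R' (ls ! i) \<sigma> (ts ! i) P g \<sigma>'" by blast
        then show ?thesis by (intro exI[of _ "(P, g, \<sigma>')"]) simp
      qed simp
    qed
    then obtain X where X: "\<And>i. i < n \<Longrightarrow> DEC R' (ls ! i) \<sigma> (ts ! i) (fst (X i)) (fst (snd (X i))) (snd (snd (X i)))"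
      by metis
    define Pf where "Pf i = fst (X i)" for i
    define gf where "gf i = fst (snd (X i))" for i
    define \<sigma>f where "\<sigma>f i = snd (snd (X i))" for i
    have D: "DEC R' (ls ! i) \<sigma> (ts ! i) (Pf i) (gf i) (\<sigma>f i)" if "i < n" for i
      using X[OF that] by (simp add: Pf_def gf_def \<sigma>f_def)
    define P where "P = {i # q | i q. i < n \<and> q \<in> Pf i}"
    define g where "g p = gf (hd p) (tl p)" for p
    define \<sigma>' where "\<sigma>' x = (if \<exists>i<n. x \<in> vars_term (ls ! i) then \<sigma>f (SOME i. i < n \<and> x \<in> vars_term (ls ! i)) x else \<sigma> x)" for x
    have disj: "i = j" if "i < n" "j < n" "x \<in> vars_term (ls ! i)" "x \<in> vars_term (ls ! j)" for i j x
      using Fun.prems(2) that by (auto simp: n_def)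
    have sig: "\<sigma>' x = \<sigma>f i x" if "i < n" "x \<in> vars_term (ls ! i)" for i x
    proof -
      have "\<exists>i<n. x \<in> vars_term (ls ! i)" using that by blast
      then have "(SOME i. i < n \<and> x \<in> vars_term (ls ! i)) = i"
        by (metis (mono_tags, lifting) disj someI_ex that)
      then show ?thesis using that unfolding \<sigma>'_def by auto
    qed
    have Pnil: "[] \<notin> P" by (auto simp: P_def)
    have Pj: "{q. j # q \<in> P} = Pf j" if "j < n" for j using that by (auto simp: P_def)
    have "DEC R' (Fun f ls) \<sigma> t P g \<sigma>'"
      unfolding DEC_def
    proof (intro conjI)
      show "P \<subseteq> fun_poss (Fun f ls)"
      proof
        fix p assume "p \<in> P"
        then obtain i a where pa: "p = i # a" "i < n" "a \<in> Pf i" by (auto simp: P_def)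
        then have "a \<in> fun_poss (ls ! i)" using D[OF pa(2)] by (auto simp: DEC_def)
        then show "p \<in> fun_poss (Fun f ls)" using pa by (simp add: n_def)
      qed
      show "\<forall>p\<in>P. \<forall>q\<in>P. p \<noteq> q \<longrightarrow> parallel_pos p q"
      proof (intro ballI impI)
        fix p q assume "p \<in> P" "q \<in> P" "p \<noteq> q"
        then obtain i a j b where pq: "p = i # a" "q = j # b" "i < n" "j < n" "a \<in> Pf i" "b \<in> Pf j"
          by (auto simp: P_def)
        show "parallel_pos p q"
        proof (cases "i = j")
          case True
          with D[OF pq(3)] pq \<open>p \<noteq> q\<close> have "parallel_pos a b" by (auto simp: DEC_def)
          then show ?thesis using pq by (simp add: parallel_Cons)
        qed (use pq in \<open>simp add: parallel_Cons\<close>)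
      qed
      show "\<forall>p\<in>P. \<exists>l' r' \<tau>. (l', r') \<in> R' \<and> subst l' \<tau> = subst (subt_at (Fun f ls) p) \<sigma> \<and> g p = subst r' \<tau>"
      proof
        fix p assume "p \<in> P"
        then obtain i a where pa: "p = i # a" "i < n" "a \<in> Pf i" by (auto simp: P_def)
        with D[OF pa(2)] show "\<exists>l' r' \<tau>. (l', r') \<in> R' \<and> subst l' \<tau> = subst (subt_at (Fun f ls) p) \<sigma> \<and> g p = subst r' \<tau>"
          by (auto simp: DEC_def g_def)
      qed
      have "replace_par (subst (ls ! j) \<sigma>') {q. j # q \<in> P} (\<lambda>q. g (j # q)) = ts ! j"
        if "j < n" for j
      proof -
        have s1: "subst (ls ! j) \<sigma>' = subst (ls ! j) (\<sigma>f j)"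
          by (rule subst_cong) (use sig that in auto)
        have e: "ts ! j = replace_par (subst (ls ! j) (\<sigma>f j)) (Pf j) (gf j)"
          using D[OF that] unfolding DEC_def by blast
        have g: "(\<lambda>q. g (j # q)) = gf j" by (simp add: g_def)
        show ?thesis unfolding s1 e g Pj[OF that] ..
      qed
      then have "ts = map (\<lambda>j. replace_par (map (\<lambda>t. subst t \<sigma>') ls ! j) {q. j # q \<in> P} (\<lambda>q. g (j # q))) [0..<length (map (\<lambda>t. subst t \<sigma>') ls)]"
        by (intro nth_equalityI) (simp_all add: len n_def)
      then show "t = replace_par (subst (Fun f ls) \<sigma>') P g"
        unfolding subst.simps replace_par_Fun[OF Pnil] ff by simp
      show "\<forall>x\<in>vars_term (Fun f ls). par R' (\<sigma> x) (\<sigma>' x)"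
      proof
        fix x assume "x \<in> vars_term (Fun f ls)"
        then obtain i where i: "i < n" "x \<in> vars_term (ls ! i)" by (auto simp: in_set_conv_nth n_def)
        with D[OF i(1)] sig[OF i] show "par R' (\<sigma> x) (\<sigma>' x)" by (auto simp: DEC_def)
      qed
      show "\<forall>p\<in>P. \<forall>x\<in>vars_term (subt_at (Fun f ls) p). \<sigma>' x = \<sigma> x"
      proof (intro ballI)
        fix p x assume "p \<in> P" "x \<in> vars_term (subt_at (Fun f ls) p)"
        then obtain i a where pa: "p = i # a" "i < n" "a \<in> Pf i" "x \<in> vars_term (subt_at (ls ! i) a)"
          by (auto simp: P_def)
        have "a \<in> poss (ls ! i)" using D[OF pa(2)] pa(3) fun_poss_poss by (auto simp: DEC_def)
        then have "x \<in> vars_term (ls ! i)" using vars_subt_at pa(4) by blast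
        with D[OF pa(2)] pa sig[OF pa(2)] show "\<sigma>' x = \<sigma> x" by (auto simp: DEC_def)
      qed
    qed
    then show ?thesis by blast
  qed
qed



lemma fresh_bij:
  assumes inf: "infinite (UNIV :: 'v set)" and fV: "finite (V :: 'v set)" and fA: "finite (A :: 'v set)"
  shows "\<exists>\<pi>. bij \<pi> \<and> \<pi> ` V \<inter> A = {}"
proof -
  have "infinite (UNIV - (V \<union> A))" using inf fV fA by auto
  then obtain W where W: "finite W" "card W = card V" "W \<subseteq> UNIV - (V \<union> A)"
    using infinite_arbitrarily_large by blast
  then obtain h where h: "bij_betw h V W" using finite_same_card_bij fV by metis
  define \<pi> where "\<pi> x = (if x \<in> V then h x else if x \<in> W then inv_into V h x else x)" for x
  have inv: "\<pi> (\<pi> x) = x" for x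
  proof -
    consider "x \<in> V" | "x \<in> W" | "x \<notin> V" "x \<notin> W" by blast
    then show ?thesis
    proof cases
      case 1
      then have "h x \<in> W" "h x \<notin> V" using h W(3) by (auto simp: bij_betw_def)
      then show ?thesis using 1 h by (simp add: \<pi>_def bij_betw_inv_into_left)
    next
      case 2
      then have "x \<notin> V" using W(3) by auto
      moreover have "inv_into V h x \<in> V" using 2 h by (meson bij_betw_apply bij_betw_inv_into)
      ultimately show ?thesis using 2 h by (simp add: \<pi>_def bij_betw_inv_into_right)
    qed (simp add: \<pi>_def)
  qed
  then have "bij \<pi>" by (metis o_bij comp_apply id_apply ext)
  moreover have "\<pi> ` V = W" using h by (auto simp: \<pi>_def bij_betw_def)
  ultimately show ?thesis using W(3) by blast
qed

lemma fresh_family: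
  assumes inf: "infinite (UNIV :: 'v set)" and finP: "finite P" and fA: "finite (A :: 'v set)"
    and fV: "\<And>p. p \<in> P \<Longrightarrow> finite (V p :: 'v set)"
  shows "\<exists>\<pi>. \<forall>p\<in>P. bij (\<pi> p) \<and> \<pi> p ` V p \<inter> A = {} \<and> (\<forall>q\<in>P. p \<noteq> q \<longrightarrow> \<pi> p ` V p \<inter> \<pi> q ` V q = {})"
  using finP fV
proof (induction P rule: finite_induct)
  case empty then show ?case by simp
next
  case (insert p P)
  then obtain \<pi> where \<pi>: "\<forall>p\<in>P. bij (\<pi> p) \<and> \<pi> p ` V p \<inter> A = {} \<and> (\<forall>q\<in>P. p \<noteq> q \<longrightarrow> \<pi> p ` V p \<inter> \<pi> q ` V q = {})"
    by blast
  have "finite (A \<union> (\<Union>q\<in>P. \<pi> q ` V q))" using insert fA by auto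
  from fresh_bij[OF inf _ this, of "V p"] insert obtain \<pi>0 where
    \<pi>0: "bij \<pi>0" "\<pi>0 ` V p \<inter> (A \<union> (\<Union>q\<in>P. \<pi> q ` V q)) = {}" by auto
  define \<pi>' where "\<pi>' = \<pi>(p := \<pi>0)"
  have a: "bij (\<pi>' q) \<and> \<pi>' q ` V q \<inter> A = {}" if "q \<in> insert p P" for q
    using that \<pi> \<pi>0 by (cases "q = p") (auto simp: \<pi>'_def)
  have b: "\<pi>' q1 ` V q1 \<inter> \<pi>' q2 ` V q2 = {}" if "q1 \<in> insert p P" "q2 \<in> insert p P" "q1 \<noteq> q2" for q1 q2
  proof (cases "q1 = p")
    case True
    then have "q2 \<in> P" using that by auto
    then have "\<pi>0 ` V p \<inter> \<pi> q2 ` V q2 = {}" using \<pi>0(2) by blast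
    then show ?thesis using True that insert(2) \<open>q2 \<in> P\<close> by (auto simp: \<pi>'_def)
  next
    case False
    show ?thesis
    proof (cases "q2 = p")
      case True
      then have "q1 \<in> P" using that False by auto
      then have "\<pi>0 ` V p \<inter> \<pi> q1 ` V q1 = {}" using \<pi>0(2) by blast
      then show ?thesis using True False that insert(2) \<open>q1 \<in> P\<close> by (auto simp: \<pi>'_def)
    next
      case False2: False
      then have "q1 \<in> P" "q2 \<in> P" using that False by auto
      then show ?thesis using \<pi> that False False2 by (simp add: \<pi>'_def)
    qed
  qed
  show ?case using a b by blast
qed

lemma variant_refl: "variant lr lr"
  unfolding variant_def by (rule exI[of _ id]) auto

lemma core:
  fixes R C :: "('f,'v) trs"
  assumes inf: "infinite (UNIV :: 'v set)" and trs: "is_trs R" and ll: "left_linear R"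
    and lr: "(l, r) \<in> R" and sub: "R' \<subseteq> R" and pt: "par R' (subst l \<sigma>) t"
    and pcp: "\<forall>(a,b)\<in>pcps R. (a,b) \<in> conv C"
  shows "(\<exists>\<sigma>'. t = subst l \<sigma>' \<and> (\<forall>x\<in>vars_term l. par R' (\<sigma> x) (\<sigma>' x))) \<or>
         (\<exists>a. par R' (subst r \<sigma>) a \<and> (t, a) \<in> conv C)"
proof -
  have lin: "lin l" using left_linear_lin[OF ll lr] .
  have vr: "vars_term r \<subseteq> vars_term l" using trs lr by (auto simp: is_trs_def)
  obtain P g \<sigma>' where D: "DEC R' l \<sigma> t P g \<sigma>'" using dec[OF pt lin] by blast
  then have PF: "P \<subseteq> fun_poss l" and Ppar: "\<forall>p\<in>P. \<forall>q\<in>P. p \<noteq> q \<longrightarrow> parallel_pos p q"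
    and Prule: "\<forall>p\<in>P. \<exists>l' r' \<tau>. (l', r') \<in> R' \<and> subst l' \<tau> = subst (subt_at l p) \<sigma> \<and> g p = subst r' \<tau>"
    and teq: "t = replace_par (subst l \<sigma>') P g" and spar: "\<forall>x\<in>vars_term l. par R' (\<sigma> x) (\<sigma>' x)"
    and seq: "\<forall>p\<in>P. \<forall>x\<in>vars_term (subt_at l p). \<sigma>' x = \<sigma> x"
    unfolding DEC_def by blast+
  show ?thesis
  proof (cases "P = {}")
    case True then show ?thesis using teq spar by (intro disjI1 exI[of _ \<sigma>']) simp
  next
    case Pne: False
    have finP: "finite P" by (rule finite_subset[OF PF]) (rule finite_subset[OF fun_poss_poss finite_poss])
    have aR: "par R' (subst r \<sigma>) (subst r \<sigma>')" by (rule par_subst_pw) (use spar vr in auto)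
    have "\<forall>p. \<exists>X. p \<in> P \<longrightarrow> (fst X, fst (snd X)) \<in> R' \<and> subst (fst X) (snd (snd X)) = subst (subt_at l p) \<sigma>
         \<and> g p = subst (fst (snd X)) (snd (snd X))"
    proof
      fix p show "\<exists>X. p \<in> P \<longrightarrow> (fst X, fst (snd X)) \<in> R' \<and> subst (fst X) (snd (snd X)) = subst (subt_at l p) \<sigma>
         \<and> g p = subst (fst (snd X)) (snd (snd X))"
      proof (cases "p \<in> P")
        case True
        then obtain l' r' \<tau>' where "(l', r') \<in> R'" "subst l' \<tau>' = subst (subt_at l p) \<sigma>" "g p = subst r' \<tau>'"
          using Prule by blast
        then show ?thesis by (intro exI[of _ "(l', r', \<tau>')"]) simp
      qed simp
    qed
    then obtain X where X: "\<And>p. p \<in> P \<Longrightarrow> (fst (X p), fst (snd (X p))) \<in> R' \<and>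
        subst (fst (X p)) (snd (snd (X p))) = subst (subt_at l p) \<sigma> \<and> g p = subst (fst (snd (X p))) (snd (snd (X p)))"
      by metis
    define L' where "L' p = fst (X p)" for p
    define R'' where "R'' p = fst (snd (X p))" for p
    define \<tau> where "\<tau> p = snd (snd (X p))" for p
    have LR: "(L' p, R'' p) \<in> R'" "subst (L' p) (\<tau> p) = subst (subt_at l p) \<sigma>" "g p = subst (R'' p) (\<tau> p)"
      if "p \<in> P" for p using X[OF that] by (auto simp: L'_def R''_def \<tau>_def)
    define V where "V p = rule_vars (L' p, R'' p)" for p
    have fV: "finite (V p)" for p by (simp add: V_def rule_vars_def)
    have fA: "finite (rule_vars (l, r))" by (simp add: rule_vars_def)
    obtain \<pi> where \<pi>: "\<And>p. p \<in> P \<Longrightarrow> bij (\<pi> p)" "\<And>p. p \<in> P \<Longrightarrow> \<pi> p ` V p \<inter> rule_vars (l, r) = {}"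
      "\<And>p q. p \<in> P \<Longrightarrow> q \<in> P \<Longrightarrow> p \<noteq> q \<Longrightarrow> \<pi> p ` V p \<inter> \<pi> q ` V q = {}"
      using fresh_family[OF inf finP fA, of V] fV by metis
    define \<rho> where "\<rho> p = (subst (L' p) (Var \<circ> \<pi> p), subst (R'' p) (Var \<circ> \<pi> p))" for p
    have rv\<rho>: "rule_vars (\<rho> p) = \<pi> p ` V p" for p
      by (auto simp: \<rho>_def V_def rule_vars_def vars_subst)
    define \<theta> where "\<theta> x = (if \<exists>p\<in>P. x \<in> \<pi> p ` V p then
        (let p0 = SOME p. p \<in> P \<and> x \<in> \<pi> p ` V p in \<tau> p0 (inv (\<pi> p0) x)) else \<sigma>' x)" for x
    have \<theta>1: "\<theta> (\<pi> p y) = \<tau> p y" if p: "p \<in> P" and y: "y \<in> V p" for p y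
    proof -
      have ex: "\<exists>p'. p' \<in> P \<and> \<pi> p y \<in> \<pi> p' ` V p'" using p y by blast
      define p0 where "p0 = (SOME p'. p' \<in> P \<and> \<pi> p y \<in> \<pi> p' ` V p')"
      have p0: "p0 \<in> P" "\<pi> p y \<in> \<pi> p0 ` V p0" using someI_ex[OF ex] by (auto simp: p0_def)
      have "p0 = p" using \<pi>(3)[OF p0(1) p] p0(2) y by blast
      moreover have "inv (\<pi> p) (\<pi> p y) = y" using \<pi>(1)[OF p] by (simp add: bij_is_inj)
      ultimately show ?thesis using p y unfolding \<theta>_def p0_def[symmetric] by (auto simp: Let_def)
    qed
    have \<theta>2: "\<theta> x = \<sigma>' x" if "x \<in> rule_vars (l, r)" for x
      using \<pi>(2) that unfolding \<theta>_def by auto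
    define E where "E = {(fst (\<rho> p), subt_at l p) | p. p \<in> P}"
    have finE: "finite E" using finP by (simp add: E_def)
    have vl: "vars_term l \<subseteq> rule_vars (l, r)" by (simp add: rule_vars_def)
    have lp: "vars_term (subt_at l p) \<subseteq> vars_term l" if "p \<in> P" for p
      using vars_subt_at that PF fun_poss_poss by blast
    have uni: "is_unifier \<theta> E" unfolding is_unifier_def E_def
    proof clarify
      fix p assume p: "p \<in> P"
      have "subst (fst (\<rho> p)) \<theta> = subst (L' p) (\<lambda>y. \<theta> (\<pi> p y))" by (simp add: \<rho>_def subst_subst)
      also have "\<dots> = subst (L' p) (\<tau> p)"
        by (rule subst_cong) (use \<theta>1[OF p] in \<open>auto simp: V_def rule_vars_def\<close>)
      also have "\<dots> = subst (subt_at l p) \<sigma>" using LR(2)[OF p] .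
      also have "\<dots> = subst (subt_at l p) \<sigma>'"
        by (rule subst_cong) (use seq p in auto)
      also have "\<dots> = subst (subt_at l p) \<theta>"
        by (rule subst_cong) (use \<theta>2 lp[OF p] vl in auto)
      finally show "subst (fst (\<rho> p)) \<theta> = subst (subt_at l p) \<theta>" .
    qed
    obtain \<mu> where mgu: "is_mgu \<mu> E" using mgu_exists[OF finE uni] by blast
    then obtain \<delta> where \<delta>: "\<And>x. \<theta> x = subst (\<mu> x) \<delta>" using uni unfolding is_mgu_def by blast
    have \<theta>\<delta>: "subst (subst s \<mu>) \<delta> = subst s \<theta>" for s
      by (simp add: subst_subst \<delta>[symmetric])
    have l\<theta>: "subst l \<theta> = subst l \<sigma>'" by (rule subst_cong) (use \<theta>2 vl in auto)
    have r\<theta>: "subst r \<theta> = subst r \<sigma>'" by (rule subst_cong) (use \<theta>2 in \<open>auto simp: rule_vars_def\<close>)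
    have g\<theta>: "subst (snd (\<rho> p)) \<theta> = g p" if p: "p \<in> P" for p
    proof -
      have "subst (snd (\<rho> p)) \<theta> = subst (R'' p) (\<lambda>y. \<theta> (\<pi> p y))" by (simp add: \<rho>_def subst_subst)
      also have "\<dots> = subst (R'' p) (\<tau> p)"
        by (rule subst_cong) (use \<theta>1[OF p] in \<open>auto simp: V_def rule_vars_def\<close>)
      finally show ?thesis using LR(3)[OF p] by simp
    qed
    show ?thesis
    proof (cases "P = {[]} \<and> variant (\<rho> []) (l, r)")
      case True
      then obtain \<pi>0 where \<pi>0: "fst (\<rho> []) = subst l (Var \<circ> \<pi>0)" "snd (\<rho> []) = subst r (Var \<circ> \<pi>0)"
        unfolding variant_def by auto
      have "([] :: pos) \<in> P" using True by simp
      then have "(fst (\<rho> []), subt_at l []) \<in> E" unfolding E_def by blast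
      then have "subst (fst (\<rho> [])) \<theta> = subst (subt_at l []) \<theta>" using uni unfolding is_unifier_def by blast
      then have "subst l (\<lambda>x. \<theta> (\<pi>0 x)) = subst l \<theta>" using \<pi>0 by (simp add: subst_subst)
      then have eqv: "\<theta> (\<pi>0 x) = \<theta> x" if "x \<in> vars_term l" for x using subst_eq_vars that by metis
      have "t = g []" using teq True by (simp add: replace_par_root)
      also have "\<dots> = subst (snd (\<rho> [])) \<theta>" using g\<theta> \<open>[] \<in> P\<close> by simp
      also have "\<dots> = subst r (\<lambda>x. \<theta> (\<pi>0 x))" using \<pi>0 by (simp add: subst_subst)
      also have "\<dots> = subst r \<theta>" by (rule subst_cong) (use eqv vr in auto)
      finally have "t = subst r \<sigma>'" using r\<theta> by simp
      then show ?thesis using aR by auto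
    next
      case notv: False
      define L where "L = replace_par (subst l \<mu>) P (\<lambda>p. subst (snd (\<rho> p)) \<mu>)"
      have var_main: "\<exists>lr0\<in>R. variant (l, r) lr0" using lr variant_refl by blast
      have var_p: "\<forall>p\<in>P. \<exists>lr0\<in>R. variant (\<rho> p) lr0"
      proof
        fix p assume p: "p \<in> P"
        have "variant (\<rho> p) (L' p, R'' p)" unfolding variant_def \<rho>_def using \<pi>(1)[OF p] by auto
        then show "\<exists>lr0\<in>R. variant (\<rho> p) lr0" using LR(1)[OF p] sub by blast
      qed
      have dis1: "\<forall>p\<in>P. rule_vars (\<rho> p) \<inter> rule_vars (l, r) = {}" using \<pi>(2) rv\<rho> by auto
      have dis2: "\<forall>p\<in>P. \<forall>q\<in>P. p \<noteq> q \<longrightarrow> rule_vars (\<rho> p) \<inter> rule_vars (\<rho> q) = {}" using \<pi>(3) rv\<rho> by auto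
      have mgu': "is_mgu \<mu> {(fst (\<rho> p), subt_at l p) | p. p \<in> P}" using mgu by (simp add: E_def)
      have "(L, subst r \<mu>) \<in> pcps R"
        unfolding pcps_def L_def
        by (rule CollectI, rule exI[of _ l], rule exI[of _ r], rule exI[of _ P], rule exI[of _ \<rho>], rule exI[of _ \<mu>])
          (use var_main var_p dis1 dis2 Pne PF Ppar mgu' notv in blast)
      then have "(L, subst r \<mu>) \<in> conv C" using pcp by auto
      then have c: "(subst L \<delta>, subst (subst r \<mu>) \<delta>) \<in> conv C" by (rule conv_subst)
      have "P \<subseteq> poss (subst l \<mu>)" using PF fun_poss_poss poss_subst by blast
      then have "subst L \<delta> = replace_par (subst l \<theta>) P (\<lambda>p. subst (snd (\<rho> p)) \<theta>)"
        unfolding L_def by (simp add: subst_replace_par \<theta>\<delta>)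
      also have "\<dots> = t" unfolding teq l\<theta> by (rule replace_par_cong) (use g\<theta> in auto)
      finally have "(t, subst r \<sigma>') \<in> conv C" using c \<theta>\<delta> r\<theta> by simp
      then show ?thesis using aR by auto
    qed
  qed
qed



lemma rsr_mono: "C \<subseteq> R \<Longrightarrow> rsr C \<subseteq> rsr R"
  by (auto simp: rsr_def intro: rs_mono)

lemma rsr_steps_mono: "C \<subseteq> R \<Longrightarrow> (rsr C)\<^sup>* \<subseteq> (rsr R)\<^sup>*"
  by (simp add: rsr_mono rtrancl_mono)

context
  fixes R C :: "('f,'v) trs"
  assumes inf: "infinite (UNIV :: 'v set)" and trs: "is_trs R" and ll: "left_linear R"
    and pcp: "\<forall>(a,b)\<in>pcps R. (a,b) \<in> conv C"
begin

lemma root_peak: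
  assumes lr: "(l, r) \<in> R1" and s1: "R1 \<subseteq> R" and s2: "R2 \<subseteq> R" and pu: "par R2 (subst l \<sigma>) u"
  shows "\<exists>a b. par R2 (subst r \<sigma>) a \<and> par R1 u b \<and> (a, b) \<in> conv C"
proof -
  have lrR: "(l, r) \<in> R" using lr s1 by auto
  have vr: "vars_term r \<subseteq> vars_term l" using trs lrR by (auto simp: is_trs_def)
  from core[OF inf trs ll lrR s2 pu pcp] show ?thesis
  proof
    assume "\<exists>\<sigma>'. u = subst l \<sigma>' \<and> (\<forall>x\<in>vars_term l. par R2 (\<sigma> x) (\<sigma>' x))"
    then obtain \<sigma>' where u: "u = subst l \<sigma>'" and p: "\<forall>x\<in>vars_term l. par R2 (\<sigma> x) (\<sigma>' x)" by blast
    have "par R2 (subst r \<sigma>) (subst r \<sigma>')" by (rule par_subst_pw) (use p vr in auto)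
    moreover have "par R1 u (subst r \<sigma>')" unfolding u by (rule proot[OF lr])
    ultimately show ?thesis using conv_refl by blast
  next
    assume "\<exists>a. par R2 (subst r \<sigma>) a \<and> (u, a) \<in> conv C"
    then obtain a where "par R2 (subst r \<sigma>) a" "(u, a) \<in> conv C" by blast
    then show ?thesis by (intro exI[of _ a] exI[of _ u]) (auto intro: conv_sym)
  qed
qed

lemma par_peak_root1:
  assumes "par R1 s t" "par R2 s u" "R1 \<subseteq> R" "R2 \<subseteq> R" "(l, r) \<in> R1" "s = subst l \<sigma>" "t = subst r \<sigma>"
  shows "\<exists>a b. par R2 t a \<and> par R1 u b \<and> (a, b) \<in> conv C"
proof -
  have "par R2 (subst l \<sigma>) u" using assms(2,6) by simp
  from root_peak[OF assms(5,3,4) this] show ?thesis using assms(7) by simp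
qed

lemma par_peak_root2:
  assumes "par R1 s t" "par R2 s u" "R1 \<subseteq> R" "R2 \<subseteq> R" "(l, r) \<in> R2" "s = subst l \<sigma>" "u = subst r \<sigma>"
  shows "\<exists>a b. par R2 t a \<and> par R1 u b \<and> (a, b) \<in> conv C"
proof -
  have "par R1 (subst l \<sigma>) t" using assms(1,6) by simp
  from root_peak[OF assms(5,4,3) this] obtain a b where
    "par R1 (subst r \<sigma>) a" "par R2 t b" "(a, b) \<in> conv C" by blast
  then show ?thesis using assms(7) conv_sym by blast
qed

lemma par_peak:
  "par R1 s t \<Longrightarrow> par R2 s u \<Longrightarrow> R1 \<subseteq> R \<Longrightarrow> R2 \<subseteq> R \<Longrightarrow>
   \<exists>a b. par R2 t a \<and> par R1 u b \<and> (a, b) \<in> conv C"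
proof (induction s arbitrary: t u)
  case (Var x)
  have "t = Var x \<or> (\<exists>l r \<sigma>. (l, r) \<in> R1 \<and> Var x = subst l \<sigma> \<and> t = subst r \<sigma>)"
    using Var.prems(1) by (cases rule: par.cases) auto
  then show ?case
  proof
    assume "\<exists>l r \<sigma>. (l, r) \<in> R1 \<and> Var x = subst l \<sigma> \<and> t = subst r \<sigma>"
    then obtain l r \<sigma> where "(l, r) \<in> R1" "Var x = subst l \<sigma>" "t = subst r \<sigma>" by blast
    then show ?thesis by (rule par_peak_root1[OF Var.prems])
  next
    assume tx: "t = Var x"
    have "u = Var x \<or> (\<exists>l r \<sigma>. (l, r) \<in> R2 \<and> Var x = subst l \<sigma> \<and> u = subst r \<sigma>)"
      using Var.prems(2) by (cases rule: par.cases) auto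
    then show ?thesis
    proof
      assume "u = Var x" with tx show ?thesis by (intro exI[of _ "Var x"]) simp
    next
      assume "\<exists>l r \<sigma>. (l, r) \<in> R2 \<and> Var x = subst l \<sigma> \<and> u = subst r \<sigma>"
      then obtain l r \<sigma> where "(l, r) \<in> R2" "Var x = subst l \<sigma>" "u = subst r \<sigma>" by blast
      then show ?thesis by (rule par_peak_root2[OF Var.prems])
    qed
  qed
next
  case (Fun f ss)
  have "(\<exists>l r \<sigma>. (l, r) \<in> R1 \<and> Fun f ss = subst l \<sigma> \<and> t = subst r \<sigma>) \<or> (\<exists>ts. t = Fun f ts \<and> list_all2 (par R1) ss ts)"
    using Fun.prems(1) by (cases rule: par.cases) auto
  then show ?case
  proof
    assume "\<exists>l r \<sigma>. (l, r) \<in> R1 \<and> Fun f ss = subst l \<sigma> \<and> t = subst r \<sigma>"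
    then obtain l r \<sigma> where "(l, r) \<in> R1" "Fun f ss = subst l \<sigma>" "t = subst r \<sigma>" by blast
    then show ?thesis by (rule par_peak_root1[OF Fun.prems])
  next
    assume "\<exists>ts. t = Fun f ts \<and> list_all2 (par R1) ss ts"
    then obtain ts where tts: "t = Fun f ts" "list_all2 (par R1) ss ts" by blast
    have "(\<exists>l r \<sigma>. (l, r) \<in> R2 \<and> Fun f ss = subst l \<sigma> \<and> u = subst r \<sigma>) \<or> (\<exists>us. u = Fun f us \<and> list_all2 (par R2) ss us)"
      using Fun.prems(2) by (cases rule: par.cases) auto
    then show ?thesis
    proof
      assume "\<exists>l r \<sigma>. (l, r) \<in> R2 \<and> Fun f ss = subst l \<sigma> \<and> u = subst r \<sigma>"
      then obtain l r \<sigma> where "(l, r) \<in> R2" "Fun f ss = subst l \<sigma>" "u = subst r \<sigma>" by blast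
      then show ?thesis by (rule par_peak_root2[OF Fun.prems])
    next
      assume "\<exists>us. u = Fun f us \<and> list_all2 (par R2) ss us"
      then obtain us where uus: "u = Fun f us" "list_all2 (par R2) ss us" by blast
      have tu: "t = Fun f ts" "u = Fun f us" using tts uus by auto
      have l1: "list_all2 (par R1) ss ts" using tts by simp
      have l2: "list_all2 (par R2) ss us" using uus by simp
      define n where "n = length ss"
      have lt: "length ts = n" "length us = n" using l1 l2 by (auto simp: n_def dest: list_all2_lengthD)
      have "\<forall>i. \<exists>X. i < n \<longrightarrow> par R2 (ts ! i) (fst X) \<and> par R1 (us ! i) (snd X) \<and> (fst X, snd X) \<in> conv C"
      proof
        fix i show "\<exists>X. i < n \<longrightarrow> par R2 (ts ! i) (fst X) \<and> par R1 (us ! i) (snd X) \<and> (fst X, snd X) \<in> conv C"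
        proof (cases "i < n")
          case True
          have p1: "par R1 (ss ! i) (ts ! i)" using l1 True by (simp add: n_def list_all2_conv_all_nth)
          have p2: "par R2 (ss ! i) (us ! i)" using l2 True by (simp add: n_def list_all2_conv_all_nth)
          have "ss ! i \<in> set ss" using True by (simp add: n_def)
          from Fun.IH[OF this p1 p2 Fun.prems(3,4)]
          obtain a b where "par R2 (ts ! i) a" "par R1 (us ! i) b" "(a, b) \<in> conv C" by blast
          then show ?thesis by (intro exI[of _ "(a, b)"]) simp
        qed simp
      qed
      then obtain X where X: "\<And>i. i < n \<Longrightarrow> par R2 (ts ! i) (fst (X i)) \<and> par R1 (us ! i) (snd (X i)) \<and> (fst (X i), snd (X i)) \<in> conv C"
        by metis
      define as where "as = map (\<lambda>i. fst (X i)) [0..<n]"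
      define bs where "bs = map (\<lambda>i. snd (X i)) [0..<n]"
      have "list_all2 (par R2) ts as" using X lt by (simp add: list_all2_conv_all_nth as_def)
      then have 1: "par R2 (Fun f ts) (Fun f as)" by (rule par.pfun)
      have "list_all2 (par R1) us bs" using X lt by (simp add: list_all2_conv_all_nth bs_def)
      then have 2: "par R1 (Fun f us) (Fun f bs)" by (rule par.pfun)
      have "list_all2 (\<lambda>a b. (a, b) \<in> conv C) as bs" using X by (simp add: list_all2_conv_all_nth as_def bs_def)
      then have 3: "(Fun f as, Fun f bs) \<in> conv C" by (rule conv_args)
      show ?thesis unfolding tu using 1 2 3 by blast
    qed
  qed
qed

theorem dir2:
  assumes CR: "C \<subseteq> R" and confC: "confluent C"
  shows "confluent R"
proof -
  let ?A = "(rsr C)\<^sup>*"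
  define D where "D = {(x, y). \<exists>z. par R x z \<and> (z, y) \<in> ?A}"
  have CRconv: "\<exists>w. (x, w) \<in> ?A \<and> (y, w) \<in> ?A" if "(x, y) \<in> conv C" for x y
    using CR_conv[OF confC that] .
  have cp1: "\<exists>x'. par R x x' \<and> (x', y) \<in> conv C" if "(s, x) \<in> rsr C" "par R s y" for s x y
  proof -
    have "par C s x" using that(1) rs_par by (auto simp: rsr_def)
    from par_peak[OF this that(2) CR order.refl] obtain a b where
      ab: "par R x a" "par C y b" "(a, b) \<in> conv C" by blast
    have "(y, b) \<in> conv C" using ab(2) par_rsr steps_conv by blast
    then show ?thesis using ab by (meson conv_sym conv_trans)
  qed
  have cp: "\<exists>x' w. par R x x' \<and> (x', w) \<in> ?A \<and> (y, w) \<in> ?A" if "(s, x) \<in> ?A" "par R s y" for s x y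
    using that(1)
  proof (induction rule: rtrancl_induct)
    case base then show ?case using that(2) by blast
  next
    case (step x1 x)
    then obtain x1' w1 where w1: "par R x1 x1'" "(x1', w1) \<in> ?A" "(y, w1) \<in> ?A" by blast
    from cp1[OF step(2) w1(1)] obtain x2 where x2: "par R x x2" "(x2, x1') \<in> conv C" by blast
    have "(x2, w1) \<in> conv C" using x2(2) w1(2) steps_conv conv_trans by blast
    then obtain w where "(x2, w) \<in> ?A" "(w1, w) \<in> ?A" using CRconv by blast
    then show ?case using x2(1) w1(3) by (meson rtrancl_trans)
  qed
  have pp: "\<exists>a' b' v. par R a a' \<and> par R b b' \<and> (a', v) \<in> ?A \<and> (b', v) \<in> ?A"
    if "par R s a" "par R s b" for s a b
  proof -
    from par_peak[OF that order.refl order.refl] obtain a' b' where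
      "par R a a'" "par R b b'" "(a', b') \<in> conv C" by blast
    then show ?thesis using CRconv by blast
  qed
  have dia: "\<exists>d. (x, d) \<in> D \<and> (y, d) \<in> D" if "(s, x) \<in> D" "(s, y) \<in> D" for s x y
  proof -
    from that(1) obtain a where a: "par R s a" "(a, x) \<in> ?A" unfolding D_def by blast
    from that(2) obtain b where b: "par R s b" "(b, y) \<in> ?A" unfolding D_def by blast
    from pp[OF a(1) b(1)] obtain a' b' v where abv: "par R a a'" "par R b b'" "(a', v) \<in> ?A" "(b', v) \<in> ?A"
      by blast
    from cp[OF a(2) abv(1)] obtain x' w where xw: "par R x x'" "(x', w) \<in> ?A" "(a', w) \<in> ?A" by blast
    from xw(3) abv(3) confC obtain k where k: "(w, k) \<in> ?A" "(v, k) \<in> ?A"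
      unfolding confluent_rsr by blast
    from cp[OF b(2) abv(2)] obtain y' w2 where yw: "par R y y'" "(y', w2) \<in> ?A" "(b', w2) \<in> ?A" by blast
    have "(b', k) \<in> ?A" using abv(4) k(2) by simp
    with yw(3) confC obtain j where j: "(w2, j) \<in> ?A" "(k, j) \<in> ?A"
      unfolding confluent_rsr by blast
    have "(x', j) \<in> ?A" using xw(2) k(1) j(2) by (meson rtrancl_trans)
    then have "(x, j) \<in> D" using xw(1) unfolding D_def by blast
    moreover have "(y', j) \<in> ?A" using yw(2) j(1) by (meson rtrancl_trans)
    then have "(y, j) \<in> D" using yw(1) unfolding D_def by blast
    ultimately show ?thesis by blast
  qed
  have D1: "rsr R \<subseteq> D" unfolding D_def rsr_def using rs_par by blast
  have D2: "D \<subseteq> (rsr R)\<^sup>*"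
  proof clarify
    fix x y assume "(x, y) \<in> D"
    then obtain z where z: "par R x z" "(z, y) \<in> ?A" unfolding D_def by blast
    have "(x, z) \<in> (rsr R)\<^sup>*" using par_rsr[OF z(1)] .
    moreover have "(z, y) \<in> (rsr R)\<^sup>*" using z(2) rsr_steps_mono[OF CR] by blast
    ultimately show "(x, y) \<in> (rsr R)\<^sup>*" by simp
  qed
  have DR: "D\<^sup>* = (rsr R)\<^sup>*"
  proof
    show "D\<^sup>* \<subseteq> (rsr R)\<^sup>*" using D2 by (metis rtrancl_subset_rtrancl)
    show "(rsr R)\<^sup>* \<subseteq> D\<^sup>*" using D1 by (rule rtrancl_mono)
  qed
  show ?thesis unfolding confluent_rsr
  proof clarify
    fix s x y assume "(s, x) \<in> (rsr R)\<^sup>*" "(s, y) \<in> (rsr R)\<^sup>*"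
    then have "(s, x) \<in> D\<^sup>*" "(s, y) \<in> D\<^sup>*" using DR by auto
    from diamond_local[of UNIV D, OF _ _ _ this] dia obtain d where "(x, d) \<in> D\<^sup>*" "(y, d) \<in> D\<^sup>*" by blast
    then show "(x, y) \<in> (rsr R)\<^sup>* O ((rsr R)\<^sup>*)\<inverse>" using DR by auto
  qed
qed

end


lemma ctx_rtrancl:
  assumes ctx: "\<And>ts i t. i < length ts \<Longrightarrow> (ts ! i, t) \<in> S \<Longrightarrow> (Fun f ts, Fun f (ts[i:=t])) \<in> S'"
  shows "(a, b) \<in> S\<^sup>* \<Longrightarrow> i < length ts \<Longrightarrow> ts ! i = a \<Longrightarrow> (Fun f ts, Fun f (ts[i := b])) \<in> S'\<^sup>*"
proof (induction rule: rtrancl_induct)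
  case base then show ?case by (metis list_update_id rtrancl.rtrancl_refl)
next
  case (step y z)
  then have "(Fun f ts, Fun f (ts[i := y])) \<in> S'\<^sup>*" by simp
  moreover have "(Fun f (ts[i := y]), Fun f ((ts[i := y])[i := z])) \<in> S'"
    using step by (intro ctx) auto
  ultimately show ?case by simp
qed

lemma args_decomp:
  assumes dec: "\<And>ts' y. (Fun f ts', y) \<in> S' \<Longrightarrow> \<exists>i t. i < length ts' \<and> (ts' ! i, t) \<in> S \<and> y = Fun f (ts'[i := t])"
  shows "(Fun f ts, y) \<in> S'\<^sup>* \<Longrightarrow> \<exists>ys. y = Fun f ys \<and> list_all2 (\<lambda>a b. (a, b) \<in> S\<^sup>*) ts ys"
proof (induction rule: rtrancl_induct)
  case base then show ?case by (auto simp: list_all2_same)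
next
  case (step y z)
  then obtain ys where ys: "y = Fun f ys" "list_all2 (\<lambda>a b. (a, b) \<in> S\<^sup>*) ts ys" by blast
  from dec[of ys z] step(2) ys(1) obtain i t where it: "i < length ys" "(ys ! i, t) \<in> S" "z = Fun f (ys[i := t])"
    by blast
  have "list_all2 (\<lambda>a b. (a, b) \<in> S\<^sup>*) ts (ys[i := t])"
    using ys(2) it by (auto simp: list_all2_conv_all_nth nth_list_update)
  then show ?case using it(3) by blast
qed

lemma args_join:
  assumes "list_all2 (\<lambda>a b. (a, b) \<in> S\<^sup>*) ts xs" "list_all2 (\<lambda>a b. (a, b) \<in> S\<^sup>*) ts ys"
    and CR: "\<forall>i x y. i < length ts \<longrightarrow> (ts ! i, x) \<in> S\<^sup>* \<longrightarrow> (ts ! i, y) \<in> S\<^sup>* \<longrightarrow> (\<exists>z. (x, z) \<in> S\<^sup>* \<and> (y, z) \<in> S\<^sup>*)"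
  shows "\<exists>zs. list_all2 (\<lambda>a b. (a, b) \<in> S\<^sup>*) xs zs \<and> list_all2 (\<lambda>a b. (a, b) \<in> S\<^sup>*) ys zs"
proof -
  define n where "n = length ts"
  have len: "length xs = n" "length ys = n" using assms(1,2) by (auto simp: n_def dest: list_all2_lengthD)
  have "\<forall>i. \<exists>z. i < n \<longrightarrow> (xs ! i, z) \<in> S\<^sup>* \<and> (ys ! i, z) \<in> S\<^sup>*"
    using CR assms(1,2) by (auto simp: list_all2_conv_all_nth n_def)
  then obtain Z where Z: "\<And>i. i < n \<Longrightarrow> (xs ! i, Z i) \<in> S\<^sup>* \<and> (ys ! i, Z i) \<in> S\<^sup>*" by metis
  show ?thesis
    by (rule exI[of _ "map Z [0..<n]"]) (use Z len in \<open>auto simp: list_all2_conv_all_nth\<close>)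
qed

lemma funs_rs: "rs C s t \<Longrightarrow> is_trs C \<Longrightarrow> funs_term t \<subseteq> funs_term s \<union> funs_trs C"
proof (induction rule: rs.induct)
  case (root l r \<sigma>)
  have "vars_term r \<subseteq> vars_term l" using root by (auto simp: is_trs_def)
  moreover have "funs_term r \<subseteq> funs_trs C" using root by (auto simp: funs_trs_def)
  ultimately show ?case by (auto simp: funs_subst)
next
  case (ctx i ts t f)
  have "ts ! i \<in> set ts" using ctx(1) by simp
  then have "funs_term (ts ! i) \<subseteq> funs_term (Fun f ts)" by auto
  moreover have "set (ts[i := t]) \<subseteq> insert t (set ts)" by (rule set_update_subset_insert)
  ultimately show ?case using ctx.IH ctx.prems by auto
qed

definition ff :: "'f set \<Rightarrow> ('f,'v) term \<Rightarrow> bool" where "ff F t \<longleftrightarrow> funs_term t \<subseteq> F"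

lemma ff_steps: "(s, t) \<in> (rsr C)\<^sup>* \<Longrightarrow> is_trs C \<Longrightarrow> ff (funs_trs C) s \<Longrightarrow> ff (funs_trs C) t"
proof (induction rule: rtrancl_induct)
  case (step y z)
  have "rs C y z" using step(2) by (simp add: rsr_def)
  from funs_rs[OF this step(4)] step(3)[OF step(4,5)] show ?case by (auto simp: ff_def)
qed simp

section \<open>confluence on foreign-free terms\<close>

context
  fixes R C :: "('f,'v) trs"
  assumes trsC: "is_trs C" and CR: "C \<subseteq> R"
    and restr: "\<forall>(l, r) \<in> restrict_trs R C. (l, r) \<in> (rstep C)\<^sup>*"
begin

lemma rsR_ff: "rs R y z \<Longrightarrow> ff (funs_trs C) y \<Longrightarrow> (y, z) \<in> (rsr C)\<^sup>*"
proof (induction rule: rs.induct)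
  case (root l r \<sigma>)
  have "funs_term l \<subseteq> funs_trs C" using root(2) funs_subst_mono[of l \<sigma>] by (auto simp: ff_def)
  then have "(l, r) \<in> restrict_trs R C" using root(1) by (simp add: restrict_trs_def)
  then have "(l, r) \<in> (rsr C)\<^sup>*" using restr by (auto simp: rstep_rsr)
  then show ?case by (rule rsr_subst)
next
  case (ctx i ts t f)
  have "ts ! i \<in> set ts" using ctx(1) by simp
  then have "ff (funs_trs C) (ts ! i)" using ctx.prems by (auto simp: ff_def)
  with ctx have "(ts ! i, t) \<in> (rsr C)\<^sup>*" by blast
  from rsr_ctx[OF this ctx(1) refl] show ?case .
qed

lemma stepsR_ff: "(x, v) \<in> (rsr R)\<^sup>* \<Longrightarrow> ff (funs_trs C) x \<Longrightarrow> (x, v) \<in> (rsr C)\<^sup>*"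
proof (induction rule: rtrancl_induct)
  case (step y z)
  then have "ff (funs_trs C) y" using ff_steps trsC by blast
  with step have "(y, z) \<in> (rsr C)\<^sup>*" using rsR_ff by (auto simp: rsr_def)
  with step show ?case by simp
qed simp

lemma CR_ff:
  assumes confR: "confluent R" and ffs: "ff (funs_trs C) s"
    and "(s, x) \<in> (rsr C)\<^sup>*" "(s, y) \<in> (rsr C)\<^sup>*"
  shows "\<exists>z. (x, z) \<in> (rsr C)\<^sup>* \<and> (y, z) \<in> (rsr C)\<^sup>*"
proof -
  have "(s, x) \<in> (rsr R)\<^sup>*" "(s, y) \<in> (rsr R)\<^sup>*" using assms(3,4) rsr_steps_mono[OF CR] by auto
  with confR obtain v where v: "(x, v) \<in> (rsr R)\<^sup>*" "(y, v) \<in> (rsr R)\<^sup>*" unfolding confluent_rsr by blast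
  have "ff (funs_trs C) x" "ff (funs_trs C) y" using ff_steps[OF _ trsC ffs] assms(3,4) by auto
  then have "(x, v) \<in> (rsr C)\<^sup>*" "(y, v) \<in> (rsr C)\<^sup>*" using v stepsR_ff by auto
  then show ?thesis by blast
qed

end



inductive ostep :: "('f,'v) trs \<Rightarrow> 'f set \<Rightarrow> ('f,'v) term \<Rightarrow> ('f,'v) term \<Rightarrow> bool" for C F where
  oroot: "(l, r) \<in> C \<Longrightarrow> ostep C F (subst l \<sigma>) (subst r \<sigma>)"
| octx: "f \<in> F \<Longrightarrow> i < length ts \<Longrightarrow> ostep C F (ts ! i) t \<Longrightarrow> ostep C F (Fun f ts) (Fun f (ts[i := t]))"

inductive istep :: "('f,'v) trs \<Rightarrow> 'f set \<Rightarrow> ('f,'v) term \<Rightarrow> ('f,'v) term \<Rightarrow> bool" for C F where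
  ialien: "f \<notin> F \<Longrightarrow> i < length ts \<Longrightarrow> rs C (ts ! i) t \<Longrightarrow> istep C F (Fun f ts) (Fun f (ts[i := t]))"
| ictx: "i < length ts \<Longrightarrow> istep C F (ts ! i) t \<Longrightarrow> istep C F (Fun f ts) (Fun f (ts[i := t]))"

definition "Orel C F = {(s, t). ostep C F s t}"
definition "Irel C F = {(s, t). istep C F s t}"

lemma ostep_rs: "ostep C F s t \<Longrightarrow> rs C s t"
  by (induction rule: ostep.induct) (auto intro: rs.intros)

lemma istep_rs: "istep C F s t \<Longrightarrow> rs C s t"
  by (induction rule: istep.induct) (auto intro: rs.intros)

lemma rs_oi: "rs C s t \<Longrightarrow> ostep C F s t \<or> istep C F s t"
proof (induction rule: rs.induct)
  case (root l r \<sigma>) then show ?case by (auto intro: oroot)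
next
  case (ctx i ts t f)
  show ?case
  proof (cases "f \<in> F")
    case True with ctx show ?thesis by (auto intro: octx ictx)
  next
    case False with ctx show ?thesis by (auto intro: ialien)
  qed
qed

lemma rsr_OI: "rsr C = Orel C F \<union> Irel C F"
  by (auto simp: rsr_def Orel_def Irel_def dest: rs_oi intro: ostep_rs istep_rs)

lemma ostep_subst: "ostep C F s t \<Longrightarrow> ostep C F (subst s \<delta>) (subst t \<delta>)"
proof (induction rule: ostep.induct)
  case (oroot l r \<sigma>)
  have "ostep C F (subst l (\<lambda>x. subst (\<sigma> x) \<delta>)) (subst r (\<lambda>x. subst (\<sigma> x) \<delta>))"
    by (rule ostep.oroot[OF oroot])
  then show ?case by (simp add: subst_subst)
next
  case (octx f i ts t)
  then show ?case using ostep.octx[of f F i "map (\<lambda>t. subst t \<delta>) ts" C "subst t \<delta>"]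
    by (simp add: map_update)
qed

lemma ff_rs_ostep: "rs C K J \<Longrightarrow> ff F K \<Longrightarrow> ostep C F K J"
proof (induction rule: rs.induct)
  case (root l r \<sigma>) show ?case by (rule oroot[OF root(1)])
next
  case (ctx i ts t f)
  have "ts ! i \<in> set ts" using ctx(1) by simp
  then have "ff F (ts ! i)" "f \<in> F" using ctx.prems by (auto simp: ff_def)
  then show ?case using ctx by (auto intro: octx)
qed

section \<open>aliens and abstraction\<close>

fun aliens :: "'f set \<Rightarrow> ('f,'v) term \<Rightarrow> ('f,'v) term set" where
  "aliens F (Var x) = {}"
| "aliens F (Fun f ts) = (if f \<in> F then \<Union> (set (map (aliens F) ts)) else {Fun f ts})"

lemma finite_aliens: "finite (aliens F t)"
  by (induction t) auto

lemma aliens_root: "a \<in> aliens F t \<Longrightarrow> \<exists>g ts. a = Fun g ts \<and> g \<notin> F"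
  by (induction t) (auto split: if_splits)

fun abst :: "'f set \<Rightarrow> (('f,'v) term \<Rightarrow> 'v) \<Rightarrow> ('f,'v) term \<Rightarrow> ('f,'v) term" where
  "abst F h (Var x) = Var x"
| "abst F h (Fun f ts) = (if f \<in> F then Fun f (map (abst F h) ts) else Var (h (Fun f ts)))"

lemma ff_abst: "ff F (abst F h t)"
  by (induction t) (auto simp: ff_def)

lemma abst_inv:
  assumes "aliens F u \<subseteq> Al" "vars_term u \<inter> W = {}" "\<And>a. a \<in> Al \<Longrightarrow> h a \<in> W \<and> \<beta> (h a) = a"
    and "\<And>w. w \<notin> W \<Longrightarrow> \<beta> w = Var w"
  shows "subst (abst F h u) \<beta> = u"
  using assms(1,2)
proof (induction u)
  case (Var x) then show ?case using assms(4) by auto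
next
  case (Fun f ts)
  show ?case
  proof (cases "f \<in> F")
    case True
    have "subst (abst F h x) \<beta> = x" if "x \<in> set ts" for x
      by (intro Fun.IH[OF that]) (use Fun.prems True that in auto)
    then show ?thesis using True by (simp add: map_idI)
  next
    case False
    then show ?thesis using Fun assms(3) by auto
  qed
qed

definition good :: "'f set \<Rightarrow> ('v \<Rightarrow> ('f,'v) term) \<Rightarrow> bool" where
  "good F \<beta> \<longleftrightarrow> (\<forall>w g ts. \<beta> w = Fun g ts \<longrightarrow> g \<notin> F)"

lemma abstraction:
  assumes inf: "infinite (UNIV :: 'v set)"
  shows "\<exists>K \<beta>. t = subst K \<beta> \<and> ff F K \<and> good F (\<beta> :: 'v \<Rightarrow> ('f,'v) term)"
proof -
  define Al where "Al = aliens F t"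
  have "infinite (UNIV - vars_term t)" using inf by auto
  then obtain W where W: "finite W" "card W = card Al" "W \<subseteq> UNIV - vars_term t"
    using infinite_arbitrarily_large by blast
  then obtain h where h: "bij_betw h Al W" using finite_same_card_bij finite_aliens Al_def by metis
  define \<beta> where "\<beta> w = (if w \<in> W then inv_into Al h w else Var w)" for w
  have 1: "h a \<in> W \<and> \<beta> (h a) = a" if "a \<in> Al" for a
    using that h W(3) by (auto simp: \<beta>_def bij_betw_def)
  have 2: "\<beta> w = Var w" if "w \<notin> W" for w using that by (simp add: \<beta>_def)
  have "subst (abst F h t) \<beta> = t"
    by (rule abst_inv[of F t Al W h \<beta>]) (use W(3) 1 2 in \<open>auto simp: Al_def\<close>)
  moreover have "good F \<beta>"
    unfolding good_def
  proof (intro allI impI)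
    fix w g ts assume a: "\<beta> w = Fun g ts"
    then have "w \<in> W" by (auto simp: \<beta>_def split: if_splits)
    then have "inv_into Al h w \<in> Al" using h by (meson bij_betw_apply bij_betw_inv_into)
    then show "g \<notin> F" using a \<open>w \<in> W\<close> aliens_root[of "inv_into Al h w" F t] by (auto simp: \<beta>_def Al_def)
  qed
  ultimately show ?thesis using ff_abst by metis
qed

lemma match_lift:
  assumes "lin l" "funs_term l \<subseteq> F" "good F \<beta>" "subst l \<sigma> = subst K \<beta>"
  shows "\<exists>\<sigma>1. K = subst l \<sigma>1 \<and> (\<forall>x\<in>vars_term l. subst (\<sigma>1 x) \<beta> = \<sigma> x)"
  using assms
proof (induction l arbitrary: K)
  case (Var x)
  show ?case by (rule exI[of _ "\<lambda>_. K"]) (use Var in auto)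
next
  case (Fun f ls)
  show ?case
  proof (cases K)
    case (Var w)
    then have "\<beta> w = Fun f (map (\<lambda>t. subst t \<sigma>) ls)" using Fun by simp
    moreover have "f \<in> F" using Fun by simp
    ultimately show ?thesis using Fun(4) by (auto simp: good_def)
  next
    case (Fun g ks)
    note K = this
    define n where "n = length ls"
    from Fun.prems(4) K have fg: "f = g" and mm: "map (\<lambda>t. subst t \<sigma>) ls = map (\<lambda>t. subst t \<beta>) ks" by auto
    then have lk: "length ks = n" by (metis length_map n_def)
    have "\<forall>i. \<exists>\<sigma>i. i < n \<longrightarrow> ks ! i = subst (ls ! i) \<sigma>i \<and> (\<forall>x\<in>vars_term (ls ! i). subst (\<sigma>i x) \<beta> = \<sigma> x)"
    proof
      fix i show "\<exists>\<sigma>i. i < n \<longrightarrow> ks ! i = subst (ls ! i) \<sigma>i \<and> (\<forall>x\<in>vars_term (ls ! i). subst (\<sigma>i x) \<beta> = \<sigma> x)"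
      proof (cases "i < n")
        case True
        have "subst (ls ! i) \<sigma> = subst (ks ! i) \<beta>" using mm True lk
          by (metis n_def nth_map)
        moreover have "ls ! i \<in> set ls" using True by (simp add: n_def)
        then have "lin (ls ! i)" "funs_term (ls ! i) \<subseteq> F" using Fun.prems by auto
        ultimately show ?thesis using Fun.IH[of "ls ! i" "ks ! i"] Fun.prems(3) True by (auto simp: n_def)
      qed simp
    qed
    then obtain S where S: "\<And>i. i < n \<Longrightarrow> ks ! i = subst (ls ! i) (S i) \<and> (\<forall>x\<in>vars_term (ls ! i). subst (S i x) \<beta> = \<sigma> x)"
      by metis
    define \<sigma>1 where "\<sigma>1 x = (if \<exists>i<n. x \<in> vars_term (ls ! i) then S (SOME i. i < n \<and> x \<in> vars_term (ls ! i)) x else Var x)" for x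
    have disj: "i = j" if "i < n" "j < n" "x \<in> vars_term (ls ! i)" "x \<in> vars_term (ls ! j)" for i j x
      using Fun.prems(1) that by (auto simp: n_def)
    have sig: "\<sigma>1 x = S i x" if "i < n" "x \<in> vars_term (ls ! i)" for i x
    proof -
      have "\<exists>i<n. x \<in> vars_term (ls ! i)" using that by blast
      then have "(SOME i. i < n \<and> x \<in> vars_term (ls ! i)) = i"
        by (metis (mono_tags, lifting) disj someI_ex that)
      then show ?thesis using that unfolding \<sigma>1_def by auto
    qed
    have "ks ! i = subst (ls ! i) \<sigma>1" if "i < n" for i
      using S[OF that] sig[OF that] by (auto intro!: subst_cong)
    then have "K = subst (Fun f ls) \<sigma>1" using K fg lk by (auto simp: list_eq_iff_nth_eq n_def)
    moreover have "\<forall>x\<in>vars_term (Fun f ls). subst (\<sigma>1 x) \<beta> = \<sigma> x"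
    proof
      fix x assume "x \<in> vars_term (Fun f ls)"
      then obtain i where i: "i < n" "x \<in> vars_term (ls ! i)" by (auto simp: in_set_conv_nth n_def)
      then show "subst (\<sigma>1 x) \<beta> = \<sigma> x" using S[OF i(1)] sig[OF i] by auto
    qed
    ultimately show ?thesis by blast
  qed
qed



definition CRat :: "('f,'v) trs \<Rightarrow> ('f,'v) term \<Rightarrow> bool" where
  "CRat C t \<longleftrightarrow> (\<forall>x y. (t, x) \<in> (rsr C)\<^sup>* \<longrightarrow> (t, y) \<in> (rsr C)\<^sup>* \<longrightarrow> (\<exists>z. (x, z) \<in> (rsr C)\<^sup>* \<and> (y, z) \<in> (rsr C)\<^sup>*))"

definition wf_rules :: "('f,'v) trs \<Rightarrow> bool" where
  "wf_rules C \<longleftrightarrow> (\<forall>(l, r)\<in>C. lin l \<and> funs_term l \<subseteq> funs_trs C \<and> vars_term r \<subseteq> vars_term l)"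

lemma wf_rulesD: "wf_rules C \<Longrightarrow> (l, r) \<in> C \<Longrightarrow> lin l \<and> funs_term l \<subseteq> funs_trs C \<and> vars_term r \<subseteq> vars_term l"
  unfolding wf_rules_def by blast

section \<open>projection of outer steps\<close>

lemma proj:
  assumes wf: "wf_rules C"
  shows "ostep C (funs_trs C) s t' \<Longrightarrow> s = subst K \<beta> \<Longrightarrow> ff (funs_trs C) K \<Longrightarrow> good (funs_trs C) \<beta> \<Longrightarrow>
    \<exists>K'. rs C K K' \<and> t' = subst K' \<beta>"
proof (induction arbitrary: K rule: ostep.induct)
  case (oroot l r \<sigma>)
  from wf_rulesD[OF wf oroot(1)] have lfr: "lin l" "funs_term l \<subseteq> funs_trs C" "vars_term r \<subseteq> vars_term l" by auto
  from match_lift[OF lfr(1,2) oroot(4)] oroot(2) obtain \<sigma>1 where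
    s1: "K = subst l \<sigma>1" "\<forall>x\<in>vars_term l. subst (\<sigma>1 x) \<beta> = \<sigma> x" by auto
  have "subst r \<sigma> = subst (subst r \<sigma>1) \<beta>" unfolding subst_subst
    by (rule subst_cong) (use s1(2) lfr(3) in auto)
  moreover have "rs C K (subst r \<sigma>1)" unfolding s1(1) by (rule rs.root[OF oroot(1)])
  ultimately show ?case by blast
next
  case (octx f i ts t)
  show ?case
  proof (cases K)
    case (Var w)
    then have "\<beta> w = Fun f ts" using octx by simp
    then show ?thesis using octx(1,7) by (auto simp: good_def)
  next
    case (Fun g ks)
    from octx(5) Fun have fg: "g = f" and ts: "ts = map (\<lambda>t. subst t \<beta>) ks" by auto
    have i: "i < length ks" using octx(2) ts by simp
    have "ks ! i \<in> set ks" using i by simp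
    then have ffk: "ff (funs_trs C) (ks ! i)" using octx(6) Fun by (auto simp: ff_def)
    from octx.IH[OF _ ffk octx(7)] i ts obtain k' where k': "rs C (ks ! i) k'" "t = subst k' \<beta>" by auto
    have "rs C K (Fun f (ks[i := k']))" unfolding Fun fg by (rule rs.ctx[OF i k'(1)])
    moreover have "Fun f (ts[i := t]) = subst (Fun f (ks[i := k'])) \<beta>" using ts k'(2) by (simp add: map_update)
    ultimately show ?thesis by blast
  qed
qed

lemma projs:
  assumes wf: "wf_rules C" and trs: "is_trs C" and g: "good (funs_trs C) \<beta>"
  shows "(subst K \<beta>, x) \<in> (Orel C (funs_trs C))\<^sup>* \<Longrightarrow> ff (funs_trs C) K \<Longrightarrow>
    \<exists>Kx. (K, Kx) \<in> (rsr C)\<^sup>* \<and> x = subst Kx \<beta>"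
proof (induction rule: rtrancl_induct)
  case base then show ?case by blast
next
  case (step y z)
  then obtain Ky where Ky: "(K, Ky) \<in> (rsr C)\<^sup>*" "y = subst Ky \<beta>" by blast
  have "ff (funs_trs C) Ky" using ff_steps[OF Ky(1) trs step(4)] .
  from proj[OF wf _ Ky(2) this g] step(2) obtain K' where "rs C Ky K'" "z = subst K' \<beta>"
    by (auto simp: Orel_def)
  then show ?case using Ky(1) by (auto simp: rsr_def intro: rtrancl_into_rtrancl)
qed

lemma lifts:
  assumes trs: "is_trs C"
  shows "(K, J) \<in> (rsr C)\<^sup>* \<Longrightarrow> ff (funs_trs C) K \<Longrightarrow> (subst K \<beta>, subst J \<beta>) \<in> (Orel C (funs_trs C))\<^sup>*"
proof (induction rule: rtrancl_induct)
  case (step y z)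
  have "ff (funs_trs C) y" using ff_steps[OF step(1) trs step(4)] .
  with step(2) have "ostep C (funs_trs C) y z" using ff_rs_ostep by (auto simp: rsr_def)
  then have "ostep C (funs_trs C) (subst y \<beta>) (subst z \<beta>)" by (rule ostep_subst)
  with step show ?case by (auto simp: Orel_def intro: rtrancl_into_rtrancl)
qed simp

lemma O_CR:
  assumes inf: "infinite (UNIV :: 'v set)" and wf: "wf_rules (C :: ('f,'v) trs)" and trs: "is_trs C"
    and ffCR: "\<And>s x y. ff (funs_trs C) s \<Longrightarrow> (s, x) \<in> (rsr C)\<^sup>* \<Longrightarrow> (s, y) \<in> (rsr C)\<^sup>* \<Longrightarrow>
       \<exists>z. (x, z) \<in> (rsr C)\<^sup>* \<and> (y, z) \<in> (rsr C)\<^sup>*"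
    and tx: "(t, x) \<in> (Orel C (funs_trs C))\<^sup>*" and ty: "(t, y) \<in> (Orel C (funs_trs C))\<^sup>*"
  shows "\<exists>z. (x, z) \<in> (Orel C (funs_trs C))\<^sup>* \<and> (y, z) \<in> (Orel C (funs_trs C))\<^sup>*"
proof -
  obtain K \<beta> where K: "t = subst K \<beta>" "ff (funs_trs C) K" "good (funs_trs C) \<beta>"
    using abstraction[OF inf] by blast
  from projs[OF wf trs K(3)] tx K obtain Kx where Kx: "(K, Kx) \<in> (rsr C)\<^sup>*" "x = subst Kx \<beta>" by auto
  from projs[OF wf trs K(3)] ty K obtain Ky where Ky: "(K, Ky) \<in> (rsr C)\<^sup>*" "y = subst Ky \<beta>" by auto
  from ffCR[OF K(2) Kx(1) Ky(1)] obtain J where J: "(Kx, J) \<in> (rsr C)\<^sup>*" "(Ky, J) \<in> (rsr C)\<^sup>*" by blast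
  have "ff (funs_trs C) Kx" "ff (funs_trs C) Ky" using ff_steps[OF _ trs K(2)] Kx(1) Ky(1) by auto
  then have "(x, subst J \<beta>) \<in> (Orel C (funs_trs C))\<^sup>*" "(y, subst J \<beta>) \<in> (Orel C (funs_trs C))\<^sup>*"
    using lifts[OF trs J(1)] lifts[OF trs J(2)] Kx(2) Ky(2) by auto
  then show ?thesis by blast
qed



fun fdepth :: "'f set \<Rightarrow> ('f,'v) term \<Rightarrow> nat" where
  "fdepth F (Var x) = 0"
| "fdepth F (Fun f ts) = (if f \<in> F then 0 else 1) + Max (insert 0 (set (map (fdepth F) ts)))"

lemma fd_arg: "t \<in> set ts \<Longrightarrow> fdepth F t + (if f \<in> F then 0 else 1) \<le> fdepth F (Fun f ts)"
proof -
  assume t: "t \<in> set ts"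
  have "fdepth F t \<le> Max (insert 0 (set (map (fdepth F) ts)))" using t by (intro Max_ge) auto
  then show ?thesis by simp
qed

lemma fd_Fun_le:
  assumes "\<And>t. t \<in> set ts \<Longrightarrow> fdepth F t + (if f \<in> F then 0 else 1) \<le> n" "f \<notin> F \<Longrightarrow> 1 \<le> n"
  shows "fdepth F (Fun f ts) \<le> n"
proof (cases "f \<in> F")
  case True
  then have "Max (insert 0 (set (map (fdepth F) ts))) \<le> n" using assms(1) by (subst Max_le_iff) auto
  then show ?thesis using True by simp
next
  case False
  have "\<forall>t\<in>set ts. fdepth F t \<le> n - 1" using assms(1) False by fastforce
  then have m: "Max (insert 0 (set (map (fdepth F) ts))) \<le> n - 1" by (subst Max_le_iff) auto
  have "1 + Max (insert 0 (set (map (fdepth F) ts))) \<le> n" using m assms(2) False by linarith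
  then show ?thesis using False by simp
qed

lemma fd_subst_ff: "ff F t \<Longrightarrow> (\<And>x. x \<in> vars_term t \<Longrightarrow> fdepth F (\<sigma> x) \<le> n) \<Longrightarrow> fdepth F (subst t \<sigma>) \<le> n"
proof (induction t)
  case (Var x) then show ?case by simp
next
  case (Fun f ts)
  have fF: "f \<in> F" using Fun.prems by (auto simp: ff_def)
  show ?case unfolding subst.simps
  proof (rule fd_Fun_le)
    fix u assume "u \<in> set (map (\<lambda>t. subst t \<sigma>) ts)"
    then obtain t where t: "t \<in> set ts" "u = subst t \<sigma>" by auto
    have "ff F t" using Fun.prems(1) t(1) by (auto simp: ff_def)
    then have "fdepth F u \<le> n" using Fun.IH[OF t(1)] Fun.prems(2) t by auto
    then show "fdepth F u + (if f \<in> F then 0 else 1) \<le> n" using fF by simp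
  qed (use fF in simp)
qed

lemma fd_subst_var: "x \<in> vars_term t \<Longrightarrow> fdepth F (\<sigma> x) \<le> fdepth F (subst t \<sigma>)"
proof (induction t)
  case (Var y) then show ?case by simp
next
  case (Fun f ts)
  then obtain t where t: "t \<in> set ts" "x \<in> vars_term t" by auto
  have "fdepth F (\<sigma> x) \<le> fdepth F (subst t \<sigma>)" using Fun.IH[OF t] .
  also have "\<dots> \<le> fdepth F (Fun f (map (\<lambda>t. subst t \<sigma>) ts))"
  proof -
    have "subst t \<sigma> \<in> set (map (\<lambda>t. subst t \<sigma>) ts)" using t(1) by simp
    from fd_arg[OF this, of F f] show ?thesis by simp
  qed
  finally show ?case by simp
qed

lemma fd_rs: "rs C s t \<Longrightarrow> is_trs C \<Longrightarrow> fdepth (funs_trs C) t \<le> fdepth (funs_trs C) s"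
proof (induction rule: rs.induct)
  case (root l r \<sigma>)
  have vr: "vars_term r \<subseteq> vars_term l" using root by (auto simp: is_trs_def)
  have ffr: "ff (funs_trs C) r" using root(1) by (auto simp: ff_def funs_trs_def)
  show ?case
  proof (rule fd_subst_ff[OF ffr])
    fix x assume "x \<in> vars_term r"
    then have "x \<in> vars_term l" using vr by auto
    then show "fdepth (funs_trs C) (\<sigma> x) \<le> fdepth (funs_trs C) (subst l \<sigma>)" by (rule fd_subst_var)
  qed
next
  case (ctx i ts t f)
  let ?F = "funs_trs C"
  have ti: "ts ! i \<in> set ts" using ctx(1) by simp
  have a: "fdepth ?F (ts ! i) + (if f \<in> ?F then 0 else 1) \<le> fdepth ?F (Fun f ts)" by (rule fd_arg[OF ti])
  have ih: "fdepth ?F t \<le> fdepth ?F (ts ! i)" by (rule ctx.IH[OF ctx.prems])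
  show ?case
  proof (rule fd_Fun_le)
    fix u assume "u \<in> set (ts[i := t])"
    then have "u \<in> insert t (set ts)" using set_update_subset_insert[of ts i t] by blast
    then show "fdepth ?F u + (if f \<in> ?F then 0 else 1) \<le> fdepth ?F (Fun f ts)"
    proof
      assume "u = t" then show ?thesis using a ih by simp
    next
      assume "u \<in> set ts" then show ?thesis by (rule fd_arg)
    qed
  next
    assume "f \<notin> funs_trs C"
    then show "1 \<le> fdepth ?F (Fun f ts)" using a by simp
  qed
qed

lemma fd_steps: "(s, t) \<in> (rsr C)\<^sup>* \<Longrightarrow> is_trs C \<Longrightarrow> fdepth (funs_trs C) t \<le> fdepth (funs_trs C) s"
proof (induction rule: rtrancl_induct)
  case (step y z)
  then show ?case using fd_rs[of C y z] by (auto simp: rsr_def)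
qed simp

section \<open>inner steps\<close>

lemma istep_Fun_cases: "istep C F (Fun f ts) x \<Longrightarrow>
  (f \<notin> F \<and> (\<exists>i t. i < length ts \<and> rs C (ts ! i) t \<and> x = Fun f (ts[i := t]))) \<or>
  (\<exists>i t. i < length ts \<and> istep C F (ts ! i) t \<and> x = Fun f (ts[i := t]))"
  by (cases rule: istep.cases) auto

lemma istep_Var: "istep C F (Var v) x \<Longrightarrow> False"
  by (cases rule: istep.cases) auto

lemma Isteps_Var: "(Var v, x) \<in> (Irel C F)\<^sup>* \<Longrightarrow> x = Var v"
  by (induction rule: rtrancl_induct) (auto simp: Irel_def dest: istep_Var)

lemma I_CR:
  assumes trs: "is_trs C" and IH: "\<And>u. fdepth (funs_trs C) u < n \<Longrightarrow> CRat C u"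
  shows "fdepth (funs_trs C) t \<le> n \<Longrightarrow> (t, x) \<in> (Irel C (funs_trs C))\<^sup>* \<Longrightarrow> (t, y) \<in> (Irel C (funs_trs C))\<^sup>* \<Longrightarrow>
    \<exists>z. (x, z) \<in> (Irel C (funs_trs C))\<^sup>* \<and> (y, z) \<in> (Irel C (funs_trs C))\<^sup>*"
proof (induction t arbitrary: x y)
  case (Var v)
  have "x = Var v" "y = Var v" using Isteps_Var[OF Var.prems(2)] Isteps_Var[OF Var.prems(3)] by auto
  then show ?case by blast
next
  case (Fun f ts)
  let ?F = "funs_trs C"
  let ?I = "Irel C ?F"
  show ?case
  proof (cases "f \<in> ?F")
    case False
    have dec: "\<exists>i t. i < length ts' \<and> (ts' ! i, t) \<in> rsr C \<and> y' = Fun f (ts'[i := t])"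
      if "(Fun f ts', y') \<in> ?I" for ts' y'
      using istep_Fun_cases[of C ?F f ts' y'] that by (auto simp: Irel_def rsr_def dest: istep_rs)
    from args_decomp[OF dec Fun.prems(2)] obtain xs where xs: "x = Fun f xs" "list_all2 (\<lambda>a b. (a, b) \<in> (rsr C)\<^sup>*) ts xs" by blast
    from args_decomp[OF dec Fun.prems(3)] obtain ys where ys: "y = Fun f ys" "list_all2 (\<lambda>a b. (a, b) \<in> (rsr C)\<^sup>*) ts ys" by blast
    have jn: "\<exists>z. (a, z) \<in> (rsr C)\<^sup>* \<and> (b, z) \<in> (rsr C)\<^sup>*" if "i < length ts" "(ts ! i, a) \<in> (rsr C)\<^sup>*" "(ts ! i, b) \<in> (rsr C)\<^sup>*" for i a b
    proof -
      have "ts ! i \<in> set ts" using that(1) by simp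
      from fd_arg[OF this, of ?F f] False have "fdepth ?F (ts ! i) + 1 \<le> fdepth ?F (Fun f ts)" by simp
      then have "fdepth ?F (ts ! i) < n" using Fun.prems(1) by linarith
      then show ?thesis using IH that unfolding CRat_def by blast
    qed
    from jn have "\<forall>i a b. i < length ts \<longrightarrow> (ts ! i, a) \<in> (rsr C)\<^sup>* \<longrightarrow> (ts ! i, b) \<in> (rsr C)\<^sup>* \<longrightarrow> (\<exists>z. (a, z) \<in> (rsr C)\<^sup>* \<and> (b, z) \<in> (rsr C)\<^sup>*)" by blast
    from args_join[OF xs(2) ys(2) this] obtain zs where zs: "list_all2 (\<lambda>a b. (a, b) \<in> (rsr C)\<^sup>*) xs zs" "list_all2 (\<lambda>a b. (a, b) \<in> (rsr C)\<^sup>*) ys zs"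
      by blast
    have ctx: "(Fun f us, Fun f (us[i := u])) \<in> ?I" if "i < length us" "(us ! i, u) \<in> rsr C" for us i u
      using that False by (auto simp: Irel_def rsr_def intro: ialien)
    have "(x, Fun f zs) \<in> ?I\<^sup>*" "(y, Fun f zs) \<in> ?I\<^sup>*"
      using args_rtrancl0[OF ctx zs(1)] args_rtrancl0[OF ctx zs(2)] xs ys by auto
    then show ?thesis by blast
  next
    case True
    have dec: "\<exists>i t. i < length ts' \<and> (ts' ! i, t) \<in> ?I \<and> y' = Fun f (ts'[i := t])"
      if "(Fun f ts', y') \<in> ?I" for ts' y'
      using istep_Fun_cases[of C ?F f ts' y'] that True by (auto simp: Irel_def)
    from args_decomp[OF dec Fun.prems(2)] obtain xs where xs: "x = Fun f xs" "list_all2 (\<lambda>a b. (a, b) \<in> ?I\<^sup>*) ts xs" by blast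
    from args_decomp[OF dec Fun.prems(3)] obtain ys where ys: "y = Fun f ys" "list_all2 (\<lambda>a b. (a, b) \<in> ?I\<^sup>*) ts ys" by blast
    have jn: "\<exists>z. (a, z) \<in> ?I\<^sup>* \<and> (b, z) \<in> ?I\<^sup>*" if "i < length ts" "(ts ! i, a) \<in> ?I\<^sup>*" "(ts ! i, b) \<in> ?I\<^sup>*" for i a b
    proof -
      have ti: "ts ! i \<in> set ts" using that(1) by simp
      from fd_arg[OF this, of ?F f] True have "fdepth ?F (ts ! i) \<le> fdepth ?F (Fun f ts)" by simp
      then have "fdepth ?F (ts ! i) \<le> n" using Fun.prems(1) by linarith
      then show ?thesis using Fun.IH[OF ti] that by blast
    qed
    from jn have "\<forall>i a b. i < length ts \<longrightarrow> (ts ! i, a) \<in> ?I\<^sup>* \<longrightarrow> (ts ! i, b) \<in> ?I\<^sup>* \<longrightarrow> (\<exists>z. (a, z) \<in> ?I\<^sup>* \<and> (b, z) \<in> ?I\<^sup>*)" by blast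
    from args_join[OF xs(2) ys(2) this] obtain zs where zs: "list_all2 (\<lambda>a b. (a, b) \<in> ?I\<^sup>*) xs zs" "list_all2 (\<lambda>a b. (a, b) \<in> ?I\<^sup>*) ys zs"
      by blast
    have ctx: "(Fun f us, Fun f (us[i := u])) \<in> ?I" if "i < length us" "(us ! i, u) \<in> ?I" for us i u
      using that by (auto simp: Irel_def intro: ictx)
    have "(x, Fun f zs) \<in> ?I\<^sup>*" "(y, Fun f zs) \<in> ?I\<^sup>*"
      using args_rtrancl0[OF ctx zs(1)] args_rtrancl0[OF ctx zs(2)] xs ys by auto
    then show ?thesis by blast
  qed
qed



lemma Isteps_subst_pw:
  "(\<And>v. v \<in> vars_term r \<Longrightarrow> (\<sigma> v, \<sigma>' v) \<in> (Irel C F)\<^sup>*) \<Longrightarrow> (subst r \<sigma>, subst r \<sigma>') \<in> (Irel C F)\<^sup>*"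
proof (induction r)
  case (Var x) then show ?case by simp
next
  case (Fun f rs)
  have ctx: "(Fun f us, Fun f (us[i := u])) \<in> Irel C F" if "i < length us" "(us ! i, u) \<in> Irel C F" for us i u
    using that by (auto simp: Irel_def intro: ictx)
  have "list_all2 (\<lambda>a b. (a, b) \<in> (Irel C F)\<^sup>*) (map (\<lambda>t. subst t \<sigma>) rs) (map (\<lambda>t. subst t \<sigma>') rs)"
  proof (rule list_all2_all_nthI)
    fix j assume j: "j < length (map (\<lambda>t. subst t \<sigma>) rs)"
    then have rj: "rs ! j \<in> set rs" by simp
    have "(subst (rs ! j) \<sigma>, subst (rs ! j) \<sigma>') \<in> (Irel C F)\<^sup>*"
    proof (rule Fun.IH[OF rj])
      fix v assume "v \<in> vars_term (rs ! j)"
      then show "(\<sigma> v, \<sigma>' v) \<in> (Irel C F)\<^sup>*" using Fun.prems rj by auto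
    qed
    then show "(map (\<lambda>t. subst t \<sigma>) rs ! j, map (\<lambda>t. subst t \<sigma>') rs ! j) \<in> (Irel C F)\<^sup>*"
      using j by simp
  qed simp
  from args_rtrancl0[OF ctx this] show ?case by simp
qed

lemma ist_inst:
  "istep C F (subst l \<sigma>) x \<Longrightarrow> lin l \<Longrightarrow> funs_term l \<subseteq> F \<Longrightarrow>
   \<exists>\<sigma>'. x = subst l \<sigma>' \<and> (\<forall>v\<in>vars_term l. (\<sigma> v, \<sigma>' v) \<in> (Irel C F)\<^sup>*)"
proof (induction l arbitrary: x)
  case (Var v)
  show ?case by (rule exI[of _ "\<sigma>(v := x)"]) (use Var in \<open>auto simp: Irel_def\<close>)
next
  case (Fun f ls)
  have fF: "f \<in> F" using Fun.prems(3) by simp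
  from istep_Fun_cases[OF Fun.prems(1)[unfolded subst.simps]] fF
  obtain i t where it: "i < length ls" "istep C F (subst (ls ! i) \<sigma>) t" "x = Fun f ((map (\<lambda>t. subst t \<sigma>) ls)[i := t])"
    by auto
  have li: "ls ! i \<in> set ls" using it(1) by simp
  have "lin (ls ! i)" "funs_term (ls ! i) \<subseteq> F" using Fun.prems(2,3) li by auto
  from Fun.IH[OF li it(2) this] obtain \<sigma>i where \<sigma>i: "t = subst (ls ! i) \<sigma>i"
    "\<forall>v\<in>vars_term (ls ! i). (\<sigma> v, \<sigma>i v) \<in> (Irel C F)\<^sup>*" by blast
  define \<sigma>' where "\<sigma>' v = (if v \<in> vars_term (ls ! i) then \<sigma>i v else \<sigma> v)" for v
  have disj: "vars_term (ls ! j) \<inter> vars_term (ls ! i) = {}" if "j < length ls" "j \<noteq> i" for j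
    using Fun.prems(2) that it(1) by auto
  have "x = subst (Fun f ls) \<sigma>'"
  proof -
    have "(map (\<lambda>t. subst t \<sigma>) ls)[i := t] = map (\<lambda>t. subst t \<sigma>') ls"
    proof (rule nth_equalityI)
      fix j assume "j < length ((map (\<lambda>t. subst t \<sigma>) ls)[i := t])"
      then have j: "j < length ls" by simp
      show "(map (\<lambda>t. subst t \<sigma>) ls)[i := t] ! j = map (\<lambda>t. subst t \<sigma>') ls ! j"
      proof (cases "j = i")
        case True
        then show ?thesis using j \<sigma>i(1) by (auto simp: \<sigma>'_def intro!: subst_cong)
      next
        case False
        then have "subst (ls ! j) \<sigma>' = subst (ls ! j) \<sigma>"
          using disj[OF j False] by (auto simp: \<sigma>'_def intro!: subst_cong)
        then show ?thesis using j False by simp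
      qed
    qed simp
    then show ?thesis using it(3) by simp
  qed
  moreover have "\<forall>v\<in>vars_term (Fun f ls). (\<sigma> v, \<sigma>' v) \<in> (Irel C F)\<^sup>*"
    using \<sigma>i(2) by (auto simp: \<sigma>'_def)
  ultimately show ?case by blast
qed

lemma com1:
  assumes wf: "wf_rules C"
  shows "ostep C (funs_trs C) s y \<Longrightarrow> istep C (funs_trs C) s x \<Longrightarrow>
    \<exists>z. (ostep C (funs_trs C) x z \<or> x = z) \<and> (y, z) \<in> (Irel C (funs_trs C))\<^sup>*"
proof (induction arbitrary: x rule: ostep.induct)
  case (oroot l r \<sigma>)
  from wf_rulesD[OF wf oroot(1)] have lfr: "lin l" "funs_term l \<subseteq> funs_trs C" "vars_term r \<subseteq> vars_term l" by auto
  from ist_inst[OF oroot(2) lfr(1,2)] obtain \<sigma>' where s': "x = subst l \<sigma>'"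
    "\<forall>v\<in>vars_term l. (\<sigma> v, \<sigma>' v) \<in> (Irel C (funs_trs C))\<^sup>*" by blast
  have "ostep C (funs_trs C) x (subst r \<sigma>')" unfolding s'(1) by (rule ostep.oroot[OF oroot(1)])
  moreover have "(subst r \<sigma>, subst r \<sigma>') \<in> (Irel C (funs_trs C))\<^sup>*"
    by (rule Isteps_subst_pw) (use s'(2) lfr(3) in auto)
  ultimately show ?case by blast
next
  case (octx f i ts t)
  let ?F = "funs_trs C"
  let ?I = "Irel C ?F"
  from istep_Fun_cases[OF octx(5)] octx(1)
  obtain j c where jc: "j < length ts" "istep C ?F (ts ! j) c" "x = Fun f (ts[j := c])" by auto
  have ctxI: "(Fun f us, Fun f (us[k := u])) \<in> ?I" if "k < length us" "(us ! k, u) \<in> ?I" for us k u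
    using that by (auto simp: Irel_def intro: ictx)
  show ?case
  proof (cases "j = i")
    case True
    from octx.IH jc True obtain z0 where z0: "ostep C ?F c z0 \<or> c = z0" "(t, z0) \<in> ?I\<^sup>*" by blast
    have "ostep C ?F x (Fun f (ts[i := z0])) \<or> x = Fun f (ts[i := z0])"
    proof (cases "c = z0")
      case True then show ?thesis using jc(3) \<open>j = i\<close> by simp
    next
      case False
      then have "ostep C ?F c z0" using z0(1) by simp
      then have "ostep C ?F (Fun f (ts[i := c])) (Fun f ((ts[i := c])[i := z0]))"
        using octx(1,2) by (intro ostep.octx) auto
      then show ?thesis using jc(3) \<open>j = i\<close> by simp
    qed
    moreover have "(Fun f (ts[i := t]), Fun f ((ts[i := t])[i := z0])) \<in> ?I\<^sup>*"
      by (rule ctx_rtrancl[OF ctxI z0(2)]) (use octx(2) in auto)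
    ultimately show ?thesis by auto
  next
    case False
    have "ostep C ?F (Fun f (ts[j := c])) (Fun f ((ts[j := c])[i := t]))"
      using octx(1,2,3) False by (intro ostep.octx) auto
    moreover have "(Fun f (ts[i := t]), Fun f ((ts[i := t])[j := c])) \<in> ?I"
      using jc(1,2) False by (intro ctxI) (auto simp: Irel_def)
    moreover have "(ts[i := t])[j := c] = (ts[j := c])[i := t]" using False by (rule list_update_swap[symmetric])
    ultimately show ?thesis using jc(3) by auto
  qed
qed

lemma hindley:
  assumes c1: "\<And>s x y. (s, y) \<in> Ob \<Longrightarrow> (s, x) \<in> Ib \<Longrightarrow> \<exists>z. (x, z) \<in> Ob\<^sup>= \<and> (y, z) \<in> Ib\<^sup>*"
  shows "(s, x) \<in> Ib\<^sup>* \<Longrightarrow> (s, y) \<in> Ob\<^sup>* \<Longrightarrow> \<exists>z. (x, z) \<in> Ob\<^sup>* \<and> (y, z) \<in> Ib\<^sup>*"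
proof -
  have a: "(s, x) \<in> Ib\<^sup>* \<Longrightarrow> (s, y) \<in> Ob \<Longrightarrow> \<exists>z. (x, z) \<in> Ob\<^sup>= \<and> (y, z) \<in> Ib\<^sup>*" for s x y
  proof (induction rule: rtrancl_induct)
    case base then show ?case by blast
  next
    case (step x1 x)
    then obtain z1 where z1: "(x1, z1) \<in> Ob\<^sup>=" "(y, z1) \<in> Ib\<^sup>*" by blast
    show ?case
    proof (cases "x1 = z1")
      case True
      then show ?thesis using z1(2) step(2) by (meson UnCI pair_in_Id_conv rtrancl.rtrancl_into_rtrancl)
    next
      case False
      then have "(x1, z1) \<in> Ob" using z1(1) by simp
      from c1[OF this step(2)] obtain z where "(x, z) \<in> Ob\<^sup>=" "(z1, z) \<in> Ib\<^sup>*" by blast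
      then show ?thesis using z1(2) by (meson rtrancl_trans)
    qed
  qed
  show "(s, x) \<in> Ib\<^sup>* \<Longrightarrow> (s, y) \<in> Ob\<^sup>* \<Longrightarrow> \<exists>z. (x, z) \<in> Ob\<^sup>* \<and> (y, z) \<in> Ib\<^sup>*"
  proof -
    assume sx: "(s, x) \<in> Ib\<^sup>*" and sy: "(s, y) \<in> Ob\<^sup>*"
    from sy show ?thesis
    proof (induction rule: rtrancl_induct)
      case base then show ?case using sx by blast
    next
      case (step y1 y)
      then obtain z1 where z1: "(x, z1) \<in> Ob\<^sup>*" "(y1, z1) \<in> Ib\<^sup>*" by blast
      from a[OF z1(2) step(2)] obtain z where "(z1, z) \<in> Ob\<^sup>=" "(y, z) \<in> Ib\<^sup>*" by blast
      then show ?case using z1(1) by (metis Un_iff pair_in_Id_conv rtrancl.rtrancl_into_rtrancl)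
    qed
  qed
qed



theorem dir1:
  fixes R C :: "('f,'v) trs"
  assumes inf: "infinite (UNIV :: 'v set)" and trs: "is_trs R" and ll: "left_linear R"
    and CR: "C \<subseteq> R" and restr: "\<forall>(l, r) \<in> restrict_trs R C. (l, r) \<in> (rstep C)\<^sup>*"
    and confR: "confluent R"
  shows "confluent C"
proof -
  let ?F = "funs_trs C"
  let ?O = "Orel C ?F"
  let ?I = "Irel C ?F"
  have trsC: "is_trs C" using trs CR unfolding is_trs_def by blast
  have wf: "wf_rules C" unfolding wf_rules_def
  proof clarify
    fix l r assume lr: "(l, r) \<in> C"
    then have "(l, r) \<in> R" using CR by auto
    then have "lin l" "vars_term r \<subseteq> vars_term l" using left_linear_lin[OF ll] trs by (auto simp: is_trs_def)
    moreover have "funs_term l \<subseteq> funs_trs C" using lr by (auto simp: funs_trs_def)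
    ultimately show "lin l \<and> funs_term l \<subseteq> funs_trs C \<and> vars_term r \<subseteq> vars_term l" by blast
  qed
  have ffCR: "\<exists>z. (x, z) \<in> (rsr C)\<^sup>* \<and> (y, z) \<in> (rsr C)\<^sup>*"
    if "ff ?F s" "(s, x) \<in> (rsr C)\<^sup>*" "(s, y) \<in> (rsr C)\<^sup>*" for s x y
    using CR_ff[OF trsC CR restr confR that] .
  have OCR: "\<exists>z. (x, z) \<in> ?O\<^sup>* \<and> (y, z) \<in> ?O\<^sup>*" if "(t, x) \<in> ?O\<^sup>*" "(t, y) \<in> ?O\<^sup>*" for t x y
    apply (rule O_CR[OF inf wf trsC _ that(1,2)])
    apply (rule ffCR)
      apply assumption+
    done
  have c1: "\<exists>z. (x, z) \<in> ?O\<^sup>= \<and> (y, z) \<in> ?I\<^sup>*" if "(s, y) \<in> ?O" "(s, x) \<in> ?I" for s x y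
  proof -
    from com1[OF wf, of s y x] that obtain z where "ostep C ?F x z \<or> x = z" "(y, z) \<in> ?I\<^sup>*"
      by (auto simp: Orel_def Irel_def)
    then show ?thesis by (auto simp: Orel_def)
  qed
  have com: "\<exists>z. (x, z) \<in> ?O\<^sup>* \<and> (y, z) \<in> ?I\<^sup>*" if "(s, x) \<in> ?I\<^sup>*" "(s, y) \<in> ?O\<^sup>*" for s x y
    apply (rule hindley[of ?O ?I, OF _ that(1,2)])
    apply (rule c1)
     apply assumption+
    done
  have OI: "?O \<subseteq> rsr C" "?I \<subseteq> rsr C" using rsr_OI[of C ?F] by auto
  have Os: "?O\<^sup>* \<subseteq> (rsr C)\<^sup>*" "?I\<^sup>* \<subseteq> (rsr C)\<^sup>*" using rtrancl_mono[OF OI(1)] rtrancl_mono[OF OI(2)] by auto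
  have main: "\<forall>t. fdepth ?F t \<le> n \<longrightarrow> CRat C t" for n
  proof (induction n rule: less_induct)
    case (less n)
    have IH: "CRat C u" if "fdepth ?F u < n" for u using less that by blast
    define T where "T = {t :: ('f,'v) term. fdepth ?F t \<le> n}"
    define D where "D = ?O\<^sup>* O ?I\<^sup>*"
    have DC: "D \<subseteq> (rsr C)\<^sup>*"
    proof
      fix p assume "p \<in> D"
      then obtain a m b where "p = (a, b)" "(a, m) \<in> ?O\<^sup>*" "(m, b) \<in> ?I\<^sup>*" unfolding D_def by blast
      then show "p \<in> (rsr C)\<^sup>*" using Os by (meson rtrancl_trans subsetD)
    qed
    have dia: "\<exists>d. (b, d) \<in> D \<and> (c, d) \<in> D" if a: "a \<in> T" "(a, b) \<in> D" "(a, c) \<in> D" for a b c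
    proof -
      from a(2) obtain a1 where a1: "(a, a1) \<in> ?O\<^sup>*" "(a1, b) \<in> ?I\<^sup>*" unfolding D_def by blast
      from a(3) obtain a2 where a2: "(a, a2) \<in> ?O\<^sup>*" "(a2, c) \<in> ?I\<^sup>*" unfolding D_def by blast
      from OCR[OF a1(1) a2(1)] obtain e where e: "(a1, e) \<in> ?O\<^sup>*" "(a2, e) \<in> ?O\<^sup>*" by blast
      from com[OF a1(2) e(1)] obtain x' where x': "(b, x') \<in> ?O\<^sup>*" "(e, x') \<in> ?I\<^sup>*" by blast
      from com[OF a2(2) e(2)] obtain y' where y': "(c, y') \<in> ?O\<^sup>*" "(e, y') \<in> ?I\<^sup>*" by blast
      have "(a, e) \<in> (rsr C)\<^sup>*" using a1(1) e(1) Os by (meson rtrancl_trans subsetD)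
      then have "fdepth ?F e \<le> n" using fd_steps[OF _ trsC] a(1) unfolding T_def by fastforce
      from I_CR[OF trsC IH this x'(2) y'(2)] obtain k where k: "(x', k) \<in> ?I\<^sup>*" "(y', k) \<in> ?I\<^sup>*" by blast
      have "(b, k) \<in> D" using x'(1) k(1) unfolding D_def by blast
      moreover have "(c, k) \<in> D" using y'(1) k(2) unfolding D_def by blast
      ultimately show ?thesis by blast
    qed
    have clo: "b \<in> T" if "a \<in> T" "(a, b) \<in> D" for a b
      using that DC fd_steps[OF _ trsC] unfolding T_def by fastforce
    have D1: "rsr C \<subseteq> D"
    proof
      fix p assume "p \<in> rsr C"
      then have "p \<in> ?O \<or> p \<in> ?I" using rsr_OI[of C ?F] by auto
      then show "p \<in> D" unfolding D_def by (cases p) auto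
    qed
    have DR: "D\<^sup>* = (rsr C)\<^sup>*"
    proof
      show "D\<^sup>* \<subseteq> (rsr C)\<^sup>*" using DC by (metis rtrancl_subset_rtrancl)
      show "(rsr C)\<^sup>* \<subseteq> D\<^sup>*" using D1 by (rule rtrancl_mono)
    qed
    show ?case unfolding CRat_def
    proof (intro allI impI)
      fix t x y assume t: "fdepth ?F t \<le> n" and tx: "(t, x) \<in> (rsr C)\<^sup>*" and ty: "(t, y) \<in> (rsr C)\<^sup>*"
      have "t \<in> T" using t by (simp add: T_def)
      have Dx: "(t, x) \<in> D\<^sup>*" and Dy: "(t, y) \<in> D\<^sup>*" using tx ty DR by auto
      have "\<exists>d. (x, d) \<in> D\<^sup>* \<and> (y, d) \<in> D\<^sup>*"
        apply (rule diamond_local[of T D, OF _ _ \<open>t \<in> T\<close> Dx Dy])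
         apply (rule dia; assumption)
        apply (rule clo; assumption)
        done
      then obtain d where "(x, d) \<in> D\<^sup>*" "(y, d) \<in> D\<^sup>*" by blast
      then show "\<exists>z. (x, z) \<in> (rsr C)\<^sup>* \<and> (y, z) \<in> (rsr C)\<^sup>*" using DR by auto
    qed
  qed
  show ?thesis unfolding confluent_rsr
  proof clarify
    fix s x y assume "(s, x) \<in> (rsr C)\<^sup>*" "(s, y) \<in> (rsr C)\<^sup>*"
    with main[of "fdepth ?F s"] obtain z where "(x, z) \<in> (rsr C)\<^sup>*" "(y, z) \<in> (rsr C)\<^sup>*"
      unfolding CRat_def by blast
    then show "(x, y) \<in> (rsr C)\<^sup>* O ((rsr C)\<^sup>*)\<inverse>" by auto
  qed
qed

theorem corollary15:
  fixes R C :: "('f, 'v) trs"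
  assumes "infinite (UNIV :: 'v set)"
    and "is_trs R" and "left_linear R"
    and "C \<subseteq> R"
    and "\<forall>(t, u) \<in> pcps R. (t, u) \<in> conv C"
    and "\<forall>(l, r) \<in> restrict_trs R C. (l, r) \<in> (rstep C)\<^sup>*"
  shows "confluent R \<longleftrightarrow> confluent C"
proof
  assume "confluent R"
  then show "confluent C" using dir1[OF assms(1,2,3,4,6)] by blast
next
  assume "confluent C"
  then show "confluent R" using dir2[OF assms(1,2,3,5,4)] by blast
qed


end
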